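(* Let $(N,h)$ be a Kähler manifold of complex dimension $n$ and $x_0\in N$. If $S_k(x_0)>0$, then the curvature is BC-$p$ positive at $x_0$ for every $p\ge k$. If $\mathrm{Ric}_k(x_0)$ is $\ell$-positive for some $\ell\le k$, then the curvature is BC-$p$ positive at $x_0$ for every $\ell\le p\le n$.
   Context: $R$ is the curvature tensor (sign convention: Fubini–Study positive), written $R_{v\bar v E\bar E}=R(v,\bar v,E,\bar E)$. The curvature is BC-$p$ positive at $x_0$ if for every unitary orthonormal set $\{E_1,\dots,E_p\}\subset T'_{x_0}N$ there exists $v\in T'_{x_0}N$ with $\sum_{i=1}^pR(v,\bar v,E_i,\bar E_i)>0$. For a $k$-dimensional complex subspace $\Sigma\subset T'_{x_0}N$ with unitary basis $E_1,\dots,E_k$: $S_k(x_0,\Sigma)=\sum_{i,j=1}^kR(E_i,\bar E_i,E_j,\bar E_j)$, and $S_k(x_0)>0$ means $S_k(x_0,\Sigma)>0$ for all such $\Sigma$; $\mathrm{Ric}_k(x_0,\Sigma)(v,\bar v)=\sum_{i=1}^kR(v,\bar v,E_i,\bar E_i)$ for $v\in\Sigma$, a Hermitian form on $\Sigma$. $\mathrm{Ric}_k(x_0)$ is $\ell$-positive if for every $k$-dimensional $\Sigma\subset T'_{x_0}N$ the sum of the $\ell$ smallest eigenvalues of the Hermitian form $\mathrm{Ric}_k(x_0,\Sigma)$ on $\Sigma$ is positive. *)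

theory Defs
  imports "Jordan_Normal_Form.Char_Poly" "HOL-Computational_Algebra.Fundamental_Theorem_Algebra"
begin

text \<open>The holomorphic tangent space T'_{x0}N is modelled as
  the space of functions 'n \<Rightarrow> complex (components w.r.t. a fixed h-unitary frame), with
  complex dimension n = CARD('n).  The metric h at x0 in that frame is the standard
  Hermitian product.  The curvature tensor at x0 is given by its components
  Rc i j k l = R(e_i, conj e_j, e_k, conj e_l).\<close>

definition herm :: "('n::finite \<Rightarrow> complex) \<Rightarrow> ('n \<Rightarrow> complex) \<Rightarrow> complex" where
  "herm u v = (\<Sum>i\<in>UNIV. u i * cnj (v i))"

definition curv :: "('n::finite \<Rightarrow> 'n \<Rightarrow> 'n \<Rightarrow> 'n \<Rightarrow> complex)
    \<Rightarrow> ('n \<Rightarrow> complex) \<Rightarrow> ('n \<Rightarrow> complex) \<Rightarrow> ('n \<Rightarrow> complex) \<Rightarrow> ('n \<Rightarrow> complex) \<Rightarrow> complex" where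
  "curv Rc X Y Z W = (\<Sum>i\<in>UNIV. \<Sum>j\<in>UNIV. \<Sum>k\<in>UNIV. \<Sum>l\<in>UNIV.
      Rc i j k l * X i * cnj (Y j) * Z k * cnj (W l))"

definition kaehler_curvature :: "('n::finite \<Rightarrow> 'n \<Rightarrow> 'n \<Rightarrow> 'n \<Rightarrow> complex) \<Rightarrow> bool" where
  "kaehler_curvature Rc \<longleftrightarrow>
     (\<forall>i j k l. Rc i j k l = Rc k j i l) \<and>
     (\<forall>i j k l. Rc i j k l = Rc i l k j) \<and>
     (\<forall>i j k l. cnj (Rc i j k l) = Rc j i l k)"

definition unitary_frame :: "nat \<Rightarrow> (nat \<Rightarrow> ('n::finite \<Rightarrow> complex)) \<Rightarrow> bool" where
  "unitary_frame p E \<longleftrightarrow> (\<forall>a<p. \<forall>b<p. herm (E a) (E b) = (if a = b then 1 else 0))"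

definition BC_positive :: "('n::finite \<Rightarrow> 'n \<Rightarrow> 'n \<Rightarrow> 'n \<Rightarrow> complex) \<Rightarrow> nat \<Rightarrow> bool" where
  "BC_positive Rc p \<longleftrightarrow>
     (\<forall>E. unitary_frame p E \<longrightarrow> (\<exists>v. (\<Sum>i<p. Re (curv Rc v v (E i) (E i))) > 0))"

text \<open>S_k(x0, Sigma) computed in a unitary basis E of Sigma.\<close>
definition S_sum :: "('n::finite \<Rightarrow> 'n \<Rightarrow> 'n \<Rightarrow> 'n \<Rightarrow> complex) \<Rightarrow> nat \<Rightarrow> (nat \<Rightarrow> ('n \<Rightarrow> complex)) \<Rightarrow> real" where
  "S_sum Rc k E = (\<Sum>i<k. \<Sum>j<k. Re (curv Rc (E i) (E i) (E j) (E j)))"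

definition S_positive :: "('n::finite \<Rightarrow> 'n \<Rightarrow> 'n \<Rightarrow> 'n \<Rightarrow> complex) \<Rightarrow> nat \<Rightarrow> bool" where
  "S_positive Rc k \<longleftrightarrow> (\<forall>E. unitary_frame k E \<longrightarrow> S_sum Rc k E > 0)"

text \<open>Matrix of the Hermitian form Ric_k(x0,Sigma) on Sigma w.r.t. the unitary basis E of Sigma.\<close>
definition Ric_matrix :: "('n::finite \<Rightarrow> 'n \<Rightarrow> 'n \<Rightarrow> 'n \<Rightarrow> complex) \<Rightarrow> nat \<Rightarrow> (nat \<Rightarrow> ('n \<Rightarrow> complex)) \<Rightarrow> complex mat" where
  "Ric_matrix Rc k E = mat k k (\<lambda>(a, b). \<Sum>i<k. curv Rc (E a) (E b) (E i) (E i))"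

definition Ric_eigenvalues :: "('n::finite \<Rightarrow> 'n \<Rightarrow> 'n \<Rightarrow> 'n \<Rightarrow> complex) \<Rightarrow> nat \<Rightarrow> (nat \<Rightarrow> ('n \<Rightarrow> complex)) \<Rightarrow> real list" where
  "Ric_eigenvalues Rc k E = sorted_list_of_multiset (image_mset Re (proots (char_poly (Ric_matrix Rc k E))))"

definition Ric_l_positive :: "('n::finite \<Rightarrow> 'n \<Rightarrow> 'n \<Rightarrow> 'n \<Rightarrow> complex) \<Rightarrow> nat \<Rightarrow> nat \<Rightarrow> bool" where
  "Ric_l_positive Rc k l \<longleftrightarrow>
     (\<forall>E. unitary_frame k E \<longrightarrow> sum_list (take l (Ric_eigenvalues Rc k E)) > 0)"

end

theory Submission
  imports Defs
begin


lemma curv_slot1: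
  "curv Rc X Y Z W = (\<Sum>i\<in>UNIV. X i * (\<Sum>j\<in>UNIV. \<Sum>k\<in>UNIV. \<Sum>l\<in>UNIV. Rc i j k l * cnj (Y j) * Z k * cnj (W l)))"
  unfolding curv_def by (simp add: sum_distrib_left mult_ac)

lemma curv_slot2:
  "curv Rc X Y Z W = (\<Sum>j\<in>UNIV. cnj (Y j) * (\<Sum>i\<in>UNIV. \<Sum>k\<in>UNIV. \<Sum>l\<in>UNIV. Rc i j k l * X i * Z k * cnj (W l)))"
  unfolding curv_def by (subst sum.swap) (simp add: sum_distrib_left mult_ac)

lemma curv_slot3:
  "curv Rc X Y Z W = (\<Sum>k\<in>UNIV. Z k * (\<Sum>i\<in>UNIV. \<Sum>j\<in>UNIV. \<Sum>l\<in>UNIV. Rc i j k l * X i * cnj (Y j) * cnj (W l)))"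
proof -
  have "curv Rc X Y Z W = (\<Sum>i\<in>UNIV. \<Sum>k\<in>UNIV. \<Sum>j\<in>UNIV. \<Sum>l\<in>UNIV. Rc i j k l * X i * cnj (Y j) * Z k * cnj (W l))"
    unfolding curv_def by (rule sum.cong[OF refl], rule sum.swap)
  also have "\<dots> = (\<Sum>k\<in>UNIV. \<Sum>i\<in>UNIV. \<Sum>j\<in>UNIV. \<Sum>l\<in>UNIV. Rc i j k l * X i * cnj (Y j) * Z k * cnj (W l))"
    by (rule sum.swap)
  finally show ?thesis by (simp add: sum_distrib_left mult_ac)
qed

lemma curv_slot4:
  "curv Rc X Y Z W = (\<Sum>l\<in>UNIV. cnj (W l) * (\<Sum>i\<in>UNIV. \<Sum>j\<in>UNIV. \<Sum>k\<in>UNIV. Rc i j k l * X i * cnj (Y j) * Z k))"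
proof -
  have a: "\<And>i j. (\<Sum>k\<in>UNIV. \<Sum>l\<in>UNIV. Rc i j k l * X i * cnj (Y j) * Z k * cnj (W l)) =
      (\<Sum>l\<in>UNIV. \<Sum>k\<in>UNIV. Rc i j k l * X i * cnj (Y j) * Z k * cnj (W l))"
    by (rule sum.swap)
  have "curv Rc X Y Z W = (\<Sum>i\<in>UNIV. \<Sum>j\<in>UNIV. \<Sum>l\<in>UNIV. \<Sum>k\<in>UNIV. Rc i j k l * X i * cnj (Y j) * Z k * cnj (W l))"
    unfolding curv_def using a by simp
  also have "\<dots> = (\<Sum>i\<in>UNIV. \<Sum>l\<in>UNIV. \<Sum>j\<in>UNIV. \<Sum>k\<in>UNIV. Rc i j k l * X i * cnj (Y j) * Z k * cnj (W l))"
    by (rule sum.cong[OF refl], rule sum.swap)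
  also have "\<dots> = (\<Sum>l\<in>UNIV. \<Sum>i\<in>UNIV. \<Sum>j\<in>UNIV. \<Sum>k\<in>UNIV. Rc i j k l * X i * cnj (Y j) * Z k * cnj (W l))"
    by (rule sum.swap)
  finally show ?thesis by (simp add: sum_distrib_left mult_ac)
qed

lemma lin_aux: fixes K :: "'i::finite \<Rightarrow> complex" shows "(\<Sum>i\<in>UNIV. (\<Sum>a\<in>A. c a * f a i) * K i) = (\<Sum>a\<in>A. c a * (\<Sum>i\<in>UNIV. f a i * K i))"
proof -
  have "(\<Sum>i\<in>UNIV. (\<Sum>a\<in>A. c a * f a i) * K i) = (\<Sum>i\<in>UNIV. \<Sum>a\<in>A. c a * (f a i * K i))"
    by (simp add: sum_distrib_right mult.assoc)
  also have "\<dots> = (\<Sum>a\<in>A. \<Sum>i\<in>UNIV. c a * (f a i * K i))" by (rule sum.swap)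
  also have "\<dots> = (\<Sum>a\<in>A. c a * (\<Sum>i\<in>UNIV. f a i * K i))" by (simp add: sum_distrib_left)
  finally show ?thesis .
qed

lemma curv_lin1: "curv Rc (\<lambda>x. \<Sum>a\<in>A. c a * f a x) Y Z W = (\<Sum>a\<in>A. c a * curv Rc (f a) Y Z W)"
  by (subst (1 2) curv_slot1) (simp add: lin_aux)

lemma curv_lin3: "curv Rc X Y (\<lambda>x. \<Sum>a\<in>A. c a * f a x) W = (\<Sum>a\<in>A. c a * curv Rc X Y (f a) W)"
  by (subst (1 2) curv_slot3) (simp add: lin_aux)

lemma curv_lin2: "curv Rc X (\<lambda>x. \<Sum>a\<in>A. c a * f a x) Z W = (\<Sum>a\<in>A. cnj (c a) * curv Rc X (f a) Z W)"
proof -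
  have "curv Rc X (\<lambda>x. \<Sum>a\<in>A. c a * f a x) Z W = (\<Sum>j\<in>UNIV. (\<Sum>a\<in>A. cnj (c a) * cnj (f a j)) * (\<Sum>i\<in>UNIV. \<Sum>k\<in>UNIV. \<Sum>l\<in>UNIV. Rc i j k l * X i * Z k * cnj (W l)))"
    by (subst curv_slot2) simp
  also have "\<dots> = (\<Sum>a\<in>A. cnj (c a) * curv Rc X (f a) Z W)"
    by (subst lin_aux) (simp add: curv_slot2[of Rc X "f _"])
  finally show ?thesis .
qed

lemma curv_lin4: "curv Rc X Y Z (\<lambda>x. \<Sum>a\<in>A. c a * f a x) = (\<Sum>a\<in>A. cnj (c a) * curv Rc X Y Z (f a))"
proof -
  have "curv Rc X Y Z (\<lambda>x. \<Sum>a\<in>A. c a * f a x) = (\<Sum>l\<in>UNIV. (\<Sum>a\<in>A. cnj (c a) * cnj (f a l)) * (\<Sum>i\<in>UNIV. \<Sum>j\<in>UNIV. \<Sum>k\<in>UNIV. Rc i j k l * X i * cnj (Y j) * Z k))"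
    by (subst curv_slot4) simp
  also have "\<dots> = (\<Sum>a\<in>A. cnj (c a) * curv Rc X Y Z (f a))"
    by (subst lin_aux) (simp add: curv_slot4[of Rc X Y Z "f _"])
  finally show ?thesis .
qed



lemma curv_tuple: "curv Rc X Y Z W = (\<Sum>q\<in>UNIV. case q of (i,j,k,l) \<Rightarrow> Rc i j k l * X i * cnj (Y j) * Z k * cnj (W l))"
  unfolding curv_def
  by (simp add: sum.cartesian_product UNIV_Times_UNIV[symmetric] del: UNIV_Times_UNIV)

lemma curv_swap13: assumes "kaehler_curvature Rc" shows "curv Rc X Y Z W = curv Rc Z Y X W"
proof -
  have s: "Rc i j k l = Rc k j i l" for i j k l using assms unfolding kaehler_curvature_def by blast
  show ?thesis unfolding curv_tuple
    apply (rule sum.reindex_bij_witness[of _ "\<lambda>(i,j,k,l). (k,j,i,l)" "\<lambda>(i,j,k,l). (k,j,i,l)"])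
    by (auto simp: s mult_ac)
qed

lemma curv_swap24: assumes "kaehler_curvature Rc" shows "curv Rc X Y Z W = curv Rc X W Z Y"
proof -
  have s: "Rc i j k l = Rc i l k j" for i j k l using assms unfolding kaehler_curvature_def by blast
  show ?thesis unfolding curv_tuple
    apply (rule sum.reindex_bij_witness[of _ "\<lambda>(i,j,k,l). (i,l,k,j)" "\<lambda>(i,j,k,l). (i,l,k,j)"])
    by (auto simp: s mult_ac)
qed

lemma curv_cnj: assumes "kaehler_curvature Rc" shows "cnj (curv Rc X Y Z W) = curv Rc Y X W Z"
proof -
  have s: "cnj (Rc i j k l) = Rc j i l k" for i j k l using assms unfolding kaehler_curvature_def by blast
  show ?thesis unfolding curv_tuple cnj_sum
    apply (rule sum.reindex_bij_witness[of _ "\<lambda>(i,j,k,l). (j,i,l,k)" "\<lambda>(i,j,k,l). (j,i,l,k)"])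
    by (auto simp: s mult_ac)
qed

lemma curv_pair: assumes "kaehler_curvature Rc" shows "curv Rc X Y Z W = curv Rc Z W X Y"
  using curv_swap13[OF assms] curv_swap24[OF assms] by metis

lemma herm_lin1: "herm (\<lambda>x. \<Sum>a\<in>A. c a * f a x) Y = (\<Sum>a\<in>A. c a * herm (f a) Y)"
  unfolding herm_def by (rule lin_aux)

lemma herm_lin2: "herm X (\<lambda>x. \<Sum>a\<in>A. c a * f a x) = (\<Sum>a\<in>A. cnj (c a) * herm X (f a))"
proof -
  have "herm X (\<lambda>x. \<Sum>a\<in>A. c a * f a x) = (\<Sum>i\<in>UNIV. (\<Sum>a\<in>A. cnj (c a) * cnj (f a i)) * X i)"
    unfolding herm_def by (simp add: mult.commute)
  also have "\<dots> = (\<Sum>a\<in>A. cnj (c a) * herm X (f a))"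
    by (subst lin_aux) (simp add: herm_def mult.commute)
  finally show ?thesis .
qed

lemma herm_cnj: "cnj (herm X Y) = herm Y X"
  unfolding herm_def cnj_sum by (simp add: mult.commute)



definition lc :: "nat \<Rightarrow> (nat \<Rightarrow> ('n::finite \<Rightarrow> complex)) \<Rightarrow> (nat \<Rightarrow> complex) \<Rightarrow> ('n \<Rightarrow> complex)" where
  "lc m E u = (\<lambda>x. \<Sum>a<m. u a * E a x)"

lemma herm_lc: assumes "unitary_frame m E"
  shows "herm (lc m E u) (lc m E v) = (\<Sum>a<m. u a * cnj (v a))"
proof -
  have "herm (lc m E u) (lc m E v) = (\<Sum>a<m. u a * (\<Sum>b<m. cnj (v b) * herm (E a) (E b)))"
    unfolding lc_def herm_lin1 herm_lin2 ..
  also have "\<dots> = (\<Sum>a<m. u a * cnj (v a))"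
  proof (rule sum.cong[OF refl])
    fix a assume a: "a \<in> {..<m}"
    have "(\<Sum>b<m. cnj (v b) * herm (E a) (E b)) = (\<Sum>b<m. if b = a then cnj (v b) else 0)"
      using assms a unfolding unitary_frame_def by (intro sum.cong) auto
    also have "\<dots> = cnj (v a)" using a by simp
    finally show "u a * (\<Sum>b<m. cnj (v b) * herm (E a) (E b)) = u a * cnj (v a)" by simp
  qed
  finally show ?thesis .
qed

lemma curv_lc:
  "curv Rc (lc m E u1) (lc m E u2) (lc m E u3) (lc m E u4) =
   (\<Sum>a<m. \<Sum>b<m. \<Sum>c<m. \<Sum>d<m. u1 a * cnj (u2 b) * u3 c * cnj (u4 d) * curv Rc (E a) (E b) (E c) (E d))"
  unfolding lc_def curv_lin1 curv_lin2 curv_lin3 curv_lin4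
  by (simp add: sum_distrib_left mult_ac)

definition skip :: "nat \<Rightarrow> nat \<Rightarrow> nat" where
  "skip a j = (if j < a then j else Suc j)"

lemma skip_bij: "a < m \<Longrightarrow> bij_betw (skip a) {..<m-1} ({..<m} - {a})"
  by (rule bij_betw_byWitness[where f'="\<lambda>x. if x < a then x else x - 1"]) (auto simp: skip_def)

lemma skip_inj: "skip a i = skip a j \<Longrightarrow> i = j"
  unfolding skip_def by (auto split: if_splits)

lemma skip_frame: assumes "unitary_frame m E" "a < m"
  shows "unitary_frame (m-1) (\<lambda>j. E (skip a j))"
proof -
  have "skip a i < m" if "i < m - 1" for i using skip_bij[OF assms(2)] that unfolding bij_betw_def by auto
  then show ?thesis using assms(1) skip_inj unfolding unitary_frame_def by metis
qed

lemma sum_skip: assumes "a < m"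
  shows "(\<Sum>j<m-1. f (skip a j)) = (\<Sum>j\<in>{..<m} - {a}. f j)"
  using sum.reindex_bij_betw[OF skip_bij[OF assms], of f] .

lemma S_skip: assumes "a < m"
  shows "S_sum Rc (m-1) (\<lambda>j. E (skip a j)) =
    (\<Sum>i\<in>{..<m} - {a}. \<Sum>j\<in>{..<m} - {a}. Re (curv Rc (E i) (E i) (E j) (E j)))"
proof -
  let ?F = "\<lambda>i j. Re (curv Rc (E i) (E i) (E j) (E j))"
  have "S_sum Rc (m-1) (\<lambda>j. E (skip a j)) = (\<Sum>i<m-1. \<Sum>j\<in>{..<m} - {a}. ?F (skip a i) j)"
    unfolding S_sum_def by (rule sum.cong[OF refl], rule sum_skip[OF assms])
  also have "\<dots> = (\<Sum>i\<in>{..<m} - {a}. \<Sum>j\<in>{..<m} - {a}. ?F i j)"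
    by (rule sum_skip[OF assms])
  finally show ?thesis .
qed

lemma sum_minus_sing: fixes g :: "nat \<Rightarrow> real" shows "a < m \<Longrightarrow> (\<Sum>i\<in>{..<m} - {a}. g i) = (\<Sum>i<m. g i) - g a"
  by (simp add: sum_diff1)

lemma skip_total: fixes t :: "nat \<Rightarrow> nat \<Rightarrow> real"
  shows "(\<Sum>a<m. \<Sum>i\<in>{..<m} - {a}. \<Sum>j\<in>{..<m} - {a}. t i j) =
    (real m - 2) * (\<Sum>i<m. \<Sum>j<m. t i j) + (\<Sum>i<m. t i i)"
proof -
  have "(\<Sum>a<m. \<Sum>i\<in>{..<m} - {a}. \<Sum>j\<in>{..<m} - {a}. t i j) =
     (\<Sum>a<m. (\<Sum>i<m. \<Sum>j<m. t i j) - (\<Sum>j<m. t a j) - (\<Sum>i<m. t i a) + t a a)"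
  proof (rule sum.cong[OF refl])
    fix a assume "a \<in> {..<m}" then have a: "a < m" by simp
    have "(\<Sum>i\<in>{..<m} - {a}. \<Sum>j\<in>{..<m} - {a}. t i j) = (\<Sum>i\<in>{..<m} - {a}. (\<Sum>j<m. t i j) - t i a)"
      using sum_minus_sing[OF a] by simp
    also have "\<dots> = (\<Sum>i<m. (\<Sum>j<m. t i j) - t i a) - ((\<Sum>j<m. t a j) - t a a)"
      using sum_minus_sing[OF a] by simp
    finally show "(\<Sum>i\<in>{..<m} - {a}. \<Sum>j\<in>{..<m} - {a}. t i j) = (\<Sum>i<m. \<Sum>j<m. t i j) - (\<Sum>j<m. t a j) - (\<Sum>i<m. t i a) + t a a"
      by (simp add: sum_subtractf)
  qed
  also have "\<dots> = real m * (\<Sum>i<m. \<Sum>j<m. t i j) - (\<Sum>a<m. \<Sum>j<m. t a j) - (\<Sum>a<m. \<Sum>i<m. t i a) + (\<Sum>a<m. t a a)"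
    by (simp add: sum.distrib sum_subtractf)
  also have "(\<Sum>a<m. \<Sum>i<m. t i a) = (\<Sum>i<m. \<Sum>j<m. t i j)" by (rule sum.swap)
  finally show ?thesis by (simp add: algebra_simps)
qed



definition rou :: "nat \<Rightarrow> int \<Rightarrow> complex" where
  "rou N t = cis (2 * pi * of_int t / of_nat N)"

lemma rou_add: "rou N (s + t) = rou N s * rou N t"
  unfolding rou_def cis_mult by (simp add: add_divide_distrib distrib_left)

lemma rou_cnj: "cnj (rou N t) = rou N (- t)"
  unfolding rou_def cis_cnj by simp

lemma rou_0[simp]: "rou N 0 = 1"
  unfolding rou_def by simp

lemma rou_diff: "rou N (s - t) = rou N s * cnj (rou N t)"
  using rou_add[of N s "-t"] by (simp add: rou_cnj)

lemma rou_norm: "rou N t * cnj (rou N t) = 1"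
  using rou_diff[of N t t] by simp

lemma rou_pow: "rou N (int s * t) = (rou N t) ^ s"
  unfolding rou_def DeMoivre by (simp add: mult_ac)

lemma rou_eq_1: assumes N: "N > 0" shows "rou N t = 1 \<longleftrightarrow> int N dvd t"
proof
  assume "rou N t = 1"
  then have "cos (2 * pi * of_int t / of_nat N) = 1" unfolding rou_def
    by (metis cis.sel(1) one_complex.sel(1))
  then obtain x :: int where x: "2 * pi * of_int t / of_nat N = of_int x * 2 * pi"
    unfolding cos_one_2pi_int by blast
  then have "of_int t = (of_int x * of_nat N :: real)" using N by (simp add: field_simps)
  then have "t = x * int N" by (metis of_int_eq_iff of_int_mult of_int_of_nat_eq)
  then show "int N dvd t" by simp
next
  assume "int N dvd t"
  then obtain x where "t = int N * x" by (auto simp: dvd_def)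
  then have "2 * pi * of_int t / of_nat N = 2 * pi * of_int x" using N by simp
  then show "rou N t = 1" unfolding rou_def by (simp add: cis_multiple_2pi)
qed

lemma rou_sum: assumes N: "N > 0"
  shows "(\<Sum>s<N. rou N (int s * t)) = (if int N dvd t then of_nat N else 0)"
proof -
  have "(\<Sum>s<N. rou N (int s * t)) = (\<Sum>s<N. (rou N t) ^ s)" by (simp add: rou_pow)
  also have "\<dots> = (if rou N t = 1 then of_nat N else (1 - (rou N t) ^ N) / (1 - rou N t))"
    by (rule sum_gp_strict)
  also have "(rou N t) ^ N = 1" using rou_eq_1[OF N, of "int N * t"] rou_pow[of N N t] by simp
  finally show ?thesis using rou_eq_1[OF N] by simp
qed

lemma dvd_small: "\<bar>t\<bar> < int N \<Longrightarrow> int N dvd t \<longleftrightarrow> t = 0"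
proof
  assume a: "\<bar>t\<bar> < int N" "int N dvd t"
  show "t = 0"
  proof (rule ccontr)
    assume "t \<noteq> 0"
    from dvd_imp_le_int[OF this a(2)] a(1) show False by simp
  qed
qed simp

lemma rou_sum_small: assumes "N > 0" "\<bar>t\<bar> < int N"
  shows "(\<Sum>s<N. rou N (int s * t)) = (if t = 0 then of_nat N else 0)"
  using rou_sum[OF assms(1)] dvd_small[OF assms(2)] by simp



lemma sidon_lt: assumes "a < b" "a \<le> c" "b \<le> d" shows "(2::nat)^a + 2^c \<noteq> 2^b + 2^d"
proof
  assume eq: "(2::nat)^a + 2^c = 2^b + 2^d"
  have db: "(2::nat)^(Suc a) dvd 2^b" by (rule le_imp_power_dvd) (use assms in simp)
  have dd: "(2::nat)^(Suc a) dvd 2^d" by (rule le_imp_power_dvd) (use assms in simp)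
  show False
  proof (cases "a = c")
    case True
    have "(2::nat)^b \<ge> 2^(Suc a)" "(2::nat)^d \<ge> 2^(Suc a)" using assms by (intro power_increasing; simp)+
    then have b': "2 * 2^c \<le> (2::nat)^b" and d': "2 * 2^c \<le> (2::nat)^d" using True by simp_all
    have p: "(0::nat) < 2^c" by simp
    from eq True have "(2::nat)^c + 2^c = 2^b + 2^d" by simp
    then show False using b' d' p by linarith
  next
    case False
    then have "(2::nat)^(Suc a) dvd 2^c" by (intro le_imp_power_dvd) (use assms(2) in simp)
    moreover have "(2::nat)^(Suc a) dvd 2^a + 2^c" using eq db dd by simp
    ultimately have "(2::nat)^(Suc a) dvd 2^a" by (simp add: dvd_add_left_iff)
    moreover have "(2::nat)^a < 2^(Suc a)" by simp
    ultimately show False by (meson nat_dvd_not_less zero_less_power zero_less_numeral)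
  qed
qed

lemma sidon_ord: assumes "a \<le> c" "b \<le> d" "(2::nat)^a + 2^c = 2^b + 2^d" shows "a = b \<and> c = d"
proof -
  have "a = b"
  proof (rule ccontr)
    assume "a \<noteq> b"
    then have "a < b \<or> b < a" by arith
    then show False using sidon_lt[of a b c d] sidon_lt[of b a d c] assms by auto
  qed
  then show ?thesis using assms(3) by simp
qed

lemma sidon: assumes "(2::int)^a + 2^c = 2^b + 2^d" shows "(a = b \<and> c = d) \<or> (a = d \<and> c = b)"
proof -
  have "int (2^a + 2^c) = int (2^b + 2^d)" using assms by simp
  then have e: "(2::nat)^a + 2^c = 2^b + 2^d" by (rule of_nat_eq_iff[THEN iffD1])
  show ?thesis
  proof (cases "a \<le> c")
    case True
    show ?thesis
    proof (cases "b \<le> d")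
      case True
      then show ?thesis using sidon_ord[OF \<open>a \<le> c\<close> True e] by simp
    next
      case False
      then show ?thesis using sidon_ord[OF \<open>a \<le> c\<close>, of d b] e by (simp add: add.commute)
    qed
  next
    case False
    then have ca: "c \<le> a" by simp
    show ?thesis
    proof (cases "b \<le> d")
      case True
      then show ?thesis using sidon_ord[OF ca True] e by (simp add: add.commute)
    next
      case False
      then show ?thesis using sidon_ord[OF ca, of d b] e by (simp add: add.commute)
    qed
  qed
qed



lemma swap3: "(\<Sum>j\<in>J. \<Sum>a\<in>A. \<Sum>b\<in>B. g j a b) = (\<Sum>a\<in>A. \<Sum>b\<in>B. \<Sum>j\<in>J. (g j a b :: complex))"
proof -
  have "(\<Sum>j\<in>J. \<Sum>a\<in>A. \<Sum>b\<in>B. g j a b) = (\<Sum>a\<in>A. \<Sum>j\<in>J. \<Sum>b\<in>B. g j a b)" by (rule sum.swap)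
  also have "\<dots> = (\<Sum>a\<in>A. \<Sum>b\<in>B. \<Sum>j\<in>J. g j a b)" by (rule sum.cong[OF refl], rule sum.swap)
  finally show ?thesis .
qed

lemma pair_expand: "(\<Sum>j\<in>J. \<Sum>a\<in>A. \<Sum>b\<in>B. u j a * cnj (u j b) * F a b) =
   (\<Sum>a\<in>A. \<Sum>b\<in>B. (\<Sum>j\<in>J. u j a * cnj (u j b)) * (F a b :: complex))"
  by (subst swap3) (simp add: sum_distrib_right)

lemma S_lc: "S_sum Rc k (\<lambda>j. lc m E (u j)) =
   Re (\<Sum>a<m. \<Sum>b<m. (\<Sum>j<k. u j a * cnj (u j b)) *
        (\<Sum>c<m. \<Sum>d<m. (\<Sum>j<k. u j c * cnj (u j d)) * curv Rc (E a) (E b) (E c) (E d)))"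
proof -
  let ?T = "\<lambda>a b c d. curv Rc (E a) (E b) (E c) (E d)"
  have "S_sum Rc k (\<lambda>j. lc m E (u j)) = Re (\<Sum>j<k. \<Sum>j'<k. curv Rc (lc m E (u j)) (lc m E (u j)) (lc m E (u j')) (lc m E (u j')))"
    unfolding S_sum_def by simp
  also have "(\<Sum>j<k. \<Sum>j'<k. curv Rc (lc m E (u j)) (lc m E (u j)) (lc m E (u j')) (lc m E (u j'))) =
     (\<Sum>j<k. \<Sum>j'<k. \<Sum>a<m. \<Sum>b<m. u j a * cnj (u j b) * (\<Sum>c<m. \<Sum>d<m. u j' c * cnj (u j' d) * ?T a b c d))"
    unfolding curv_lc by (simp add: sum_distrib_left mult_ac)
  also have "\<dots> = (\<Sum>j<k. \<Sum>a<m. \<Sum>b<m. \<Sum>j'<k. u j a * cnj (u j b) * (\<Sum>c<m. \<Sum>d<m. u j' c * cnj (u j' d) * ?T a b c d))"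
    by (rule sum.cong[OF refl], rule swap3)
  also have "\<dots> = (\<Sum>j<k. \<Sum>a<m. \<Sum>b<m. u j a * cnj (u j b) * (\<Sum>j'<k. \<Sum>c<m. \<Sum>d<m. u j' c * cnj (u j' d) * ?T a b c d))"
    by (simp add: sum_distrib_left)
  also have "\<dots> = (\<Sum>a<m. \<Sum>b<m. (\<Sum>j<k. u j a * cnj (u j b)) * (\<Sum>j'<k. \<Sum>c<m. \<Sum>d<m. u j' c * cnj (u j' d) * ?T a b c d))"
    by (rule pair_expand)
  also have "\<dots> = (\<Sum>a<m. \<Sum>b<m. (\<Sum>j<k. u j a * cnj (u j b)) * (\<Sum>c<m. \<Sum>d<m. (\<Sum>j<k. u j c * cnj (u j d)) * ?T a b c d))"
    by (subst pair_expand) simp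
  finally show ?thesis .
qed

lemma frame_lc: assumes "unitary_frame m E"
  and "\<And>j j'. j < k \<Longrightarrow> j' < k \<Longrightarrow> (\<Sum>a<m. u j a * cnj (u j' a)) = (if j = j' then 1 else 0)"
  shows "unitary_frame k (\<lambda>j. lc m E (u j))"
  using assms unfolding unitary_frame_def by (simp add: herm_lc[OF assms(1)])



definition phi :: "nat \<Rightarrow> nat \<Rightarrow> nat \<Rightarrow> complex" where
  "phi N s a = rou N (int s * 2^a)"

definition Ud :: "nat \<Rightarrow> nat \<Rightarrow> nat \<Rightarrow> nat \<Rightarrow> nat \<Rightarrow> complex" where
  "Ud m N s j a = phi N s a * rou m (int (Suc j) * int a) / of_real (sqrt (real m))"

definition kap :: "nat \<Rightarrow> nat \<Rightarrow> nat \<Rightarrow> complex" where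
  "kap m a b = (if a = b then 1 else 0) - 1 / of_nat m"

lemma phi_norm: "phi N s a * cnj (phi N s a) = 1"
  unfolding phi_def by (rule rou_norm)

lemma sqrt_sq_c: "of_real (sqrt (real m)) * of_real (sqrt (real m)) = (of_nat m :: complex)"
proof -
  have "of_real (sqrt (real m)) * of_real (sqrt (real m)) = (of_real (sqrt (real m) * sqrt (real m)) :: complex)"
    by (simp only: of_real_mult)
  also have "\<dots> = of_real (real m)" by simp
  finally show ?thesis by simp
qed

lemma Ud_prod: "Ud m N s j a * cnj (Ud m N s j' b) =
   phi N s a * cnj (phi N s b) * rou m (int (Suc j) * int a - int (Suc j') * int b) / of_nat m"
  unfolding Ud_def rou_diff by (simp add: sqrt_sq_c[symmetric] mult_ac)

lemma Ud_orth: assumes m: "m > 0" and j: "j < m - 1" "j' < m - 1"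
  shows "(\<Sum>a<m. Ud m N s j a * cnj (Ud m N s j' a)) = (if j = j' then 1 else 0)"
proof -
  have "(\<Sum>a<m. Ud m N s j a * cnj (Ud m N s j' a)) = (\<Sum>a<m. rou m (int a * (int j - int j'))) / of_nat m"
    unfolding Ud_prod phi_norm sum_divide_distrib
    by (rule sum.cong[OF refl]) (simp add: algebra_simps)
  also have "\<dots> = (if int j - int j' = 0 then of_nat m else 0) / of_nat m"
    using j by (subst rou_sum_small[OF m]) auto
  finally show ?thesis using m by simp
qed

lemma rou_shift_sum: assumes m: "m > 0" and t: "\<bar>t\<bar> < int m"
  shows "(\<Sum>j<m-1. rou m (int (Suc j) * t)) = (if t = 0 then of_nat m else 0) - 1"
proof -
  have "(\<Sum>j<m. rou m (int j * t)) = (\<Sum>j<Suc (m-1). rou m (int j * t))" using m by simp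
  also have "\<dots> = 1 + (\<Sum>j<m-1. rou m (int (Suc j) * t))"
    by (subst sum.lessThan_Suc_shift) simp
  finally show ?thesis using rou_sum_small[OF m t] by (simp add: algebra_simps)
qed

lemma Ud_P: assumes m: "m > 0" and ab: "a < m" "b < m"
  shows "(\<Sum>j<m-1. Ud m N s j a * cnj (Ud m N s j b)) = phi N s a * cnj (phi N s b) * kap m a b"
proof -
  have "(\<Sum>j<m-1. Ud m N s j a * cnj (Ud m N s j b)) =
      phi N s a * cnj (phi N s b) * (\<Sum>j<m-1. rou m (int (Suc j) * (int a - int b))) / of_nat m"
    unfolding Ud_prod sum_divide_distrib sum_distrib_left
    by (rule sum.cong[OF refl]) (simp add: algebra_simps)
  also have "(\<Sum>j<m-1. rou m (int (Suc j) * (int a - int b))) = (if int a - int b = 0 then of_nat m else 0) - 1"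
    using ab by (intro rou_shift_sum[OF m]) auto
  finally show ?thesis using m unfolding kap_def by (auto simp: field_simps)
qed

lemma phi4: assumes abcd: "a < m" "b < m" "c < m" "d < m"
  shows "(\<Sum>s<2^(m+1). phi (2^(m+1)) s a * cnj (phi (2^(m+1)) s b) * phi (2^(m+1)) s c * cnj (phi (2^(m+1)) s d))
    = (if (a = b \<and> c = d) \<or> (a = d \<and> c = b) then of_nat (2^(m+1)) else 0)"
proof -
  let ?N = "2^(m+1) :: nat"
  let ?t = "(2::int)^a - 2^b + 2^c - 2^d"
  have "phi ?N s a * cnj (phi ?N s b) * phi ?N s c * cnj (phi ?N s d) = rou ?N (int s * ?t)" for s
  proof -
    have "phi ?N s a * cnj (phi ?N s b) * phi ?N s c * cnj (phi ?N s d) =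
      rou ?N (int s * 2^a + (- (int s * 2^b)) + int s * 2^c + (- (int s * 2^d)))"
      unfolding phi_def rou_cnj rou_add by simp
    also have "int s * 2^a + (- (int s * 2^b)) + int s * 2^c + (- (int s * 2^d)) = int s * ?t"
      by (simp add: algebra_simps)
    finally show ?thesis .
  qed
  then have "(\<Sum>s<?N. phi ?N s a * cnj (phi ?N s b) * phi ?N s c * cnj (phi ?N s d)) = (\<Sum>s<?N. rou ?N (int s * ?t))"
    by simp
  also have "\<dots> = (if ?t = 0 then of_nat ?N else 0)"
  proof (rule rou_sum_small)
    have p: "(2::int)^x < 2^m" if "x < m" for x using that by (simp add: power_strict_increasing)
    have "(2::int)^a < 2^m" "(2::int)^b < 2^m" "(2::int)^c < 2^m" "(2::int)^d < 2^m" using p abcd by simp_all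
    moreover have "(2::int)^(m+1) = 2 * 2^m" by simp
    ultimately have "(2::int)^a + 2^c < 2^(m+1)" "(2::int)^b + 2^d < 2^(m+1)" by linarith+
    moreover have "(2::int)^a > 0" "(2::int)^b > 0" "(2::int)^c > 0" "(2::int)^d > 0" by simp_all
    moreover have "int ?N = (2::int)^(m+1)" by simp
    ultimately show "\<bar>?t\<bar> < int ?N" unfolding abs_less_iff by linarith
  qed simp
  also have "(?t = 0) = ((a = b \<and> c = d) \<or> (a = d \<and> c = b))"
  proof
    assume "?t = 0" then have "(2::int)^a + 2^c = 2^b + 2^d" by simp
    then show "(a = b \<and> c = d) \<or> (a = d \<and> c = b)" by (rule sidon)
  qed auto
  finally show ?thesis .
qed



lemma if_sum_const: "(\<Sum>x\<in>A. if P then f x else 0) = (if P then (\<Sum>x\<in>A. f x) else (0::complex))"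
  by simp

lemma collapse1: fixes m :: nat shows "(\<Sum>a<m. \<Sum>b<m. \<Sum>c<m. \<Sum>d<m. if a = b \<and> c = d then X a b c d else (0::complex)) = (\<Sum>a<m. \<Sum>c<m. X a a c c)"
proof -
  have "(\<Sum>a<m. \<Sum>b<m. \<Sum>c<m. \<Sum>d<m. if a = b \<and> c = d then X a b c d else (0::complex)) =
        (\<Sum>a<m. \<Sum>b<m. if a = b then (\<Sum>c<m. \<Sum>d<m. if c = d then X a b c d else 0) else 0)"
    by (intro sum.cong refl) auto
  also have "\<dots> = (\<Sum>a<m. \<Sum>c<m. \<Sum>d<m. if c = d then X a a c d else 0)"
    by (rule sum.cong[OF refl]) (simp add: sum.delta sum.delta')
  also have "\<dots> = (\<Sum>a<m. \<Sum>c<m. X a a c c)"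
    by (rule sum.cong[OF refl], rule sum.cong[OF refl]) (simp add: sum.delta sum.delta')
  finally show ?thesis .
qed

lemma delta_conj: fixes m :: nat shows "(\<Sum>d<m. if a = d \<and> P then f d else (0::complex)) = (if a < m \<and> P then f a else 0)"
  by (cases P) simp_all

lemma delta_conj2: fixes m :: nat shows "(\<Sum>d<m. if d = a \<and> P then f d else (0::complex)) = (if a < m \<and> P then f a else 0)"
  by (cases P) simp_all

lemma collapse2: fixes m :: nat shows "(\<Sum>a<m. \<Sum>b<m. \<Sum>c<m. \<Sum>d<m. if a = d \<and> c = b \<and> a \<noteq> b then X a b c d else (0::complex)) =
   (\<Sum>a<m. \<Sum>c<m. if a \<noteq> c then X a c c a else 0)"
proof -
  have "(\<Sum>a<m. \<Sum>b<m. \<Sum>c<m. \<Sum>d<m. if a = d \<and> c = b \<and> a \<noteq> b then X a b c d else (0::complex)) =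
        (\<Sum>a<m. \<Sum>b<m. \<Sum>c<m. if a < m \<and> (c = b \<and> a \<noteq> b) then X a b c a else 0)"
    by (simp only: delta_conj)
  also have "\<dots> = (\<Sum>a<m. \<Sum>b<m. \<Sum>c<m. if c = b \<and> a \<noteq> b then X a b c a else 0)"
    by (intro sum.cong refl) simp
  also have "\<dots> = (\<Sum>a<m. \<Sum>b<m. if b < m \<and> a \<noteq> b then X a b b a else 0)"
    by (simp only: delta_conj2)
  also have "\<dots> = (\<Sum>a<m. \<Sum>b<m. if a \<noteq> b then X a b b a else 0)"
    by (intro sum.cong refl) simp
  finally show ?thesis .
qed

lemma if_split_pair: "(if (a = b \<and> c = d) \<or> (a = d \<and> c = b) then x else 0) =
  (if a = b \<and> c = d then x else 0) + (if a = d \<and> c = b \<and> a \<noteq> b then x else (0::complex))"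
  by auto

lemma pair_collapse: fixes m :: nat shows "(\<Sum>a<m. \<Sum>b<m. \<Sum>c<m. \<Sum>d<m. if (a = b \<and> c = d) \<or> (a = d \<and> c = b) then X a b c d else (0::complex)) =
   (\<Sum>a<m. \<Sum>c<m. X a a c c) + (\<Sum>a<m. \<Sum>c<m. if a \<noteq> c then X a c c a else 0)"
proof -
  have "(\<Sum>a<m. \<Sum>b<m. \<Sum>c<m. \<Sum>d<m. if (a = b \<and> c = d) \<or> (a = d \<and> c = b) then X a b c d else (0::complex)) =
    (\<Sum>a<m. \<Sum>b<m. \<Sum>c<m. \<Sum>d<m. (if a = b \<and> c = d then X a b c d else 0) + (if a = d \<and> c = b \<and> a \<noteq> b then X a b c d else 0))"
    by (simp only: if_split_pair)
  also have "\<dots> = (\<Sum>a<m. \<Sum>b<m. \<Sum>c<m. \<Sum>d<m. if a = b \<and> c = d then X a b c d else 0) +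
     (\<Sum>a<m. \<Sum>b<m. \<Sum>c<m. \<Sum>d<m. if a = d \<and> c = b \<and> a \<noteq> b then X a b c d else 0)"
    by (simp add: sum.distrib)
  finally show ?thesis unfolding collapse1 collapse2 .
qed

lemma swap5: "(\<Sum>s\<in>S. \<Sum>a\<in>A. \<Sum>b\<in>B. \<Sum>c\<in>C. \<Sum>d\<in>D. g s a b c d) = (\<Sum>a\<in>A. \<Sum>b\<in>B. \<Sum>c\<in>C. \<Sum>d\<in>D. \<Sum>s\<in>S. (g s a b c d :: complex))"
proof -
  have "(\<Sum>s\<in>S. \<Sum>a\<in>A. \<Sum>b\<in>B. \<Sum>c\<in>C. \<Sum>d\<in>D. g s a b c d) = (\<Sum>a\<in>A. \<Sum>s\<in>S. \<Sum>b\<in>B. \<Sum>c\<in>C. \<Sum>d\<in>D. g s a b c d)"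
    by (rule sum.swap)
  also have "\<dots> = (\<Sum>a\<in>A. \<Sum>b\<in>B. \<Sum>s\<in>S. \<Sum>c\<in>C. \<Sum>d\<in>D. g s a b c d)"
    by (intro sum.cong refl, rule sum.swap)
  also have "\<dots> = (\<Sum>a\<in>A. \<Sum>b\<in>B. \<Sum>c\<in>C. \<Sum>s\<in>S. \<Sum>d\<in>D. g s a b c d)"
    by (intro sum.cong refl, rule sum.swap)
  also have "\<dots> = (\<Sum>a\<in>A. \<Sum>b\<in>B. \<Sum>c\<in>C. \<Sum>d\<in>D. \<Sum>s\<in>S. g s a b c d)"
    by (intro sum.cong refl, rule sum.swap)
  finally show ?thesis .
qed



lemma design_S: assumes K: "kaehler_curvature Rc" and m: "m > 0"
  shows "S_sum Rc (m-1) (\<lambda>j. lc m E (Ud m N s j)) =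
    Re (\<Sum>a<m. \<Sum>b<m. \<Sum>c<m. \<Sum>d<m. phi N s a * cnj (phi N s b) * phi N s c * cnj (phi N s d) *
        (kap m a b * kap m c d * curv Rc (E a) (E b) (E c) (E d)))"
proof -
  have Q: "(\<Sum>j<m - Suc 0. Ud m N s j a * cnj (Ud m N s j b)) = phi N s a * cnj (phi N s b) * kap m a b"
    if "a \<in> {..<m}" "b \<in> {..<m}" for a b using Ud_P[OF m] that by simp
  have "(\<Sum>a<m. \<Sum>b<m. (\<Sum>j<m-1. Ud m N s j a * cnj (Ud m N s j b)) *
        (\<Sum>c<m. \<Sum>d<m. (\<Sum>j<m-1. Ud m N s j c * cnj (Ud m N s j d)) * curv Rc (E a) (E b) (E c) (E d))) =
    (\<Sum>a<m. \<Sum>b<m. \<Sum>c<m. \<Sum>d<m. phi N s a * cnj (phi N s b) * phi N s c * cnj (phi N s d) *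
        (kap m a b * kap m c d * curv Rc (E a) (E b) (E c) (E d)))"
    apply (simp add: Q)
    by (simp add: sum_distrib_left mult_ac)
  then show ?thesis unfolding S_lc by simp
qed

lemma phi4N: assumes "N = 2^(m+1)" "a \<in> {..<m}" "b \<in> {..<m}" "c \<in> {..<m}" "d \<in> {..<m}"
  shows "(\<Sum>s<N. phi N s a * cnj (phi N s b) * phi N s c * cnj (phi N s d))
    = (if (a = b \<and> c = d) \<or> (a = d \<and> c = b) then of_nat N else 0)"
  using phi4[of a m b c d] assms by simp

lemma design_total: assumes K: "kaehler_curvature Rc" and m: "m > 0" and N: "N = 2^(m+1)"
  shows "(\<Sum>s<N. S_sum Rc (m-1) (\<lambda>j. lc m E (Ud m N s j))) =
    real N * ((1 - 1 / real m)^2 * (\<Sum>a<m. \<Sum>c<m. Re (curv Rc (E a) (E a) (E c) (E c)))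
      + ((\<Sum>a<m. \<Sum>c<m. Re (curv Rc (E a) (E a) (E c) (E c))) - (\<Sum>a<m. Re (curv Rc (E a) (E a) (E a) (E a)))) / (real m)^2)"
proof -
  define T where "T = (\<lambda>a b c d. curv Rc (E a) (E b) (E c) (E d))"
  define Kf where "Kf = (\<lambda>a b c d. kap m a b * kap m c d * T a b c d)"
  have "(\<Sum>s<N. S_sum Rc (m-1) (\<lambda>j. lc m E (Ud m N s j))) =
     Re (\<Sum>s<N. \<Sum>a<m. \<Sum>b<m. \<Sum>c<m. \<Sum>d<m. phi N s a * cnj (phi N s b) * phi N s c * cnj (phi N s d) * Kf a b c d)"
  proof -
    have "(\<Sum>s<N. S_sum Rc (m-1) (\<lambda>j. lc m E (Ud m N s j))) =
      (\<Sum>s<N. Re (\<Sum>a<m. \<Sum>b<m. \<Sum>c<m. \<Sum>d<m. phi N s a * cnj (phi N s b) * phi N s c * cnj (phi N s d) * Kf a b c d))"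
      by (simp only: design_S[OF K m] Kf_def T_def)
    then show ?thesis by (simp only: Re_sum)
  qed
  also have "(\<Sum>s<N. \<Sum>a<m. \<Sum>b<m. \<Sum>c<m. \<Sum>d<m. phi N s a * cnj (phi N s b) * phi N s c * cnj (phi N s d) * Kf a b c d)
     = (\<Sum>a<m. \<Sum>b<m. \<Sum>c<m. \<Sum>d<m. (\<Sum>s<N. phi N s a * cnj (phi N s b) * phi N s c * cnj (phi N s d)) * Kf a b c d)"
    by (subst swap5) (simp only: sum_distrib_right)
  also have "\<dots> = (\<Sum>a<m. \<Sum>b<m. \<Sum>c<m. \<Sum>d<m. if (a = b \<and> c = d) \<or> (a = d \<and> c = b) then of_nat N * Kf a b c d else 0)"
    by (intro sum.cong refl) (simp add: phi4N[OF N])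
  also have "\<dots> = (\<Sum>a<m. \<Sum>c<m. of_nat N * Kf a a c c) + (\<Sum>a<m. \<Sum>c<m. if a \<noteq> c then of_nat N * Kf a c c a else 0)"
    by (rule pair_collapse)
  also have "(\<Sum>a<m. \<Sum>c<m. of_nat N * Kf a a c c) = of_nat N * of_real ((1 - 1 / real m)^2) * (\<Sum>a<m. \<Sum>c<m. T a a c c)"
    unfolding Kf_def kap_def by (simp add: sum_distrib_left mult_ac power2_eq_square)
  also have "(\<Sum>a<m. \<Sum>c<m. if a \<noteq> c then of_nat N * Kf a c c a else 0) =
      (\<Sum>a<m. \<Sum>c<m. of_nat N * of_real (1 / (real m)^2) * T a a c c - (if a = c then of_nat N * of_real (1 / (real m)^2) * T a a c c else 0))"
  proof (intro sum.cong refl)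
    fix a c
    have "T a c c a = T a a c c" unfolding T_def using curv_swap24[OF K] by metis
    then show "(if a \<noteq> c then of_nat N * Kf a c c a else 0) =
      of_nat N * of_real (1 / (real m)^2) * T a a c c - (if a = c then of_nat N * of_real (1 / (real m)^2) * T a a c c else 0)"
      unfolding Kf_def kap_def by (simp add: power2_eq_square)
  qed
  also have "\<dots> = of_nat N * of_real (1 / (real m)^2) * ((\<Sum>a<m. \<Sum>c<m. T a a c c) - (\<Sum>a<m. T a a a a))"
    by (simp add: sum_subtractf sum_distrib_left right_diff_distrib)
  finally have eq: "(\<Sum>s<N. S_sum Rc (m-1) (\<lambda>j. lc m E (Ud m N s j))) =
     Re (of_nat N * of_real ((1 - 1 / real m)^2) * (\<Sum>a<m. \<Sum>c<m. T a a c c) +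
       of_nat N * of_real (1 / (real m)^2) * ((\<Sum>a<m. \<Sum>c<m. T a a c c) - (\<Sum>a<m. T a a a a)))" .
  have ar: "\<And>(x::real) y z w v. x * y * z + x * (z - w) / v = x * (y * z + (z - w) / v)"
    by (simp add: distrib_left mult.assoc)
  show ?thesis unfolding eq T_def by (simp add: Re_sum ar)
qed



lemma sum_pos_ex: fixes f :: "nat \<Rightarrow> real" assumes "(\<Sum>i\<in>A. f i) > 0" shows "\<exists>i\<in>A. f i > 0"
proof (rule ccontr)
  assume "\<not> (\<exists>i\<in>A. f i > 0)"
  then have "(\<Sum>i\<in>A. f i) \<le> 0" by (intro sum_nonpos) auto
  with assms show False by simp
qed

lemma S_step: assumes K: "kaehler_curvature Rc" and m: "m \<ge> 2"
  and IH: "\<And>F. unitary_frame (m-1) F \<Longrightarrow> S_sum Rc (m-1) F > 0"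
  and E: "unitary_frame m E"
  shows "S_sum Rc m E > 0"
proof -
  define S where "S = (\<Sum>a<m. \<Sum>c<m. Re (curv Rc (E a) (E a) (E c) (E c)))"
  define D where "D = (\<Sum>a<m. Re (curv Rc (E a) (E a) (E a) (E a)))"
  define N :: nat where "N = 2^(m+1)"
  have m0: "m > 0" using m by simp
  have SS: "S_sum Rc m E = S" unfolding S_sum_def S_def ..
  have i1: "(\<Sum>a<m. S_sum Rc (m-1) (\<lambda>j. E (skip a j))) > 0"
  proof -
    have "S_sum Rc (m-1) (\<lambda>j. E (skip a j)) > 0" if "a \<in> {..<m}" for a
      using IH[OF skip_frame[OF E]] that by simp
    then show ?thesis using m0 by (intro sum_pos) auto
  qed
  have i2: "(\<Sum>a<m. S_sum Rc (m-1) (\<lambda>j. E (skip a j))) = (real m - 2) * S + D"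
  proof -
    have "(\<Sum>a<m. S_sum Rc (m-1) (\<lambda>j. E (skip a j))) =
      (\<Sum>a<m. \<Sum>i\<in>{..<m} - {a}. \<Sum>j\<in>{..<m} - {a}. Re (curv Rc (E i) (E i) (E j) (E j)))"
      by (rule sum.cong[OF refl], rule S_skip) simp
    then show ?thesis unfolding S_def D_def skip_total .
  qed
  have fr: "unitary_frame (m-1) (\<lambda>j. lc m E (Ud m N s j))" for s
    by (rule frame_lc[OF E]) (simp add: Ud_orth[OF m0])
  have N0: "N > 0" unfolding N_def by simp
  have d1: "(\<Sum>s<N. S_sum Rc (m-1) (\<lambda>j. lc m E (Ud m N s j))) > 0"
  proof -
    have "S_sum Rc (m-1) (\<lambda>j. lc m E (Ud m N s j)) > 0" for s using IH[OF fr] .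
    then show ?thesis using N0 by (intro sum_pos) auto
  qed
  have d2: "(\<Sum>s<N. S_sum Rc (m-1) (\<lambda>j. lc m E (Ud m N s j))) = real N * ((1 - 1 / real m)^2 * S + (S - D) / (real m)^2)"
    unfolding S_def D_def by (rule design_total[OF K m0 N_def])
  have X: "(1 - 1 / real m)^2 * S + (S - D) / (real m)^2 > 0"
    using d1 d2 N0 by (simp add: zero_less_mult_iff)
  have mm: "(real m)^2 * ((1 - 1 / real m)^2 * S + (S - D) / (real m)^2) = (real m - 1)^2 * S + S - D"
    using m0 by (simp add: field_simps power2_eq_square)
  have Y: "(real m - 1)^2 * S + S - D > 0"
    using X m0 mm by (metis mult_pos_pos of_nat_0_less_iff zero_less_power)
  have Z: "(real m - 2) * S + D > 0" using i1 i2 by simp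
  have "((real m - 1)^2 + real m - 1) * S > 0" using Y Z by (simp add: algebra_simps)
  moreover have "(real m - 1)^2 + real m - 1 > 0"
  proof -
    have "real m \<ge> 2" using m by simp
    moreover have "(real m - 1)^2 \<ge> 0" by simp
    ultimately show ?thesis by linarith
  qed
  ultimately have "S > 0" by (simp add: zero_less_mult_iff)
  then show ?thesis using SS by simp
qed

lemma S_all: assumes K: "kaehler_curvature Rc" and k: "k \<ge> 1" and Sk: "S_positive Rc k" and p: "p \<ge> k"
  shows "\<And>E. unitary_frame p E \<Longrightarrow> S_sum Rc p E > 0"
  using p
proof (induction p rule: dec_induct)
  case base
  then show ?case using Sk unfolding S_positive_def by blast
next
  case (step n)
  show ?case
    by (rule S_step[OF K]) (use step k in auto)
qed

lemma BC_from_S: assumes "\<And>E. unitary_frame p E \<Longrightarrow> S_sum Rc p E > 0"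
  shows "BC_positive Rc p"
  unfolding BC_positive_def
proof (intro allI impI)
  fix E :: "nat \<Rightarrow> 'a \<Rightarrow> complex" assume "unitary_frame p E"
  then have "(\<Sum>i<p. \<Sum>j<p. Re (curv Rc (E i) (E i) (E j) (E j))) > 0"
    using assms unfolding S_sum_def by blast
  then obtain i where "(\<Sum>j<p. Re (curv Rc (E i) (E i) (E j) (E j))) > 0" using sum_pos_ex by blast
  then show "\<exists>v. (\<Sum>i<p. Re (curv Rc v v (E i) (E i))) > 0" by blast
qed

lemma part1: assumes K: "kaehler_curvature Rc" and k: "k \<ge> 1" and Sk: "S_positive Rc k"
  shows "\<forall>p\<ge>k. BC_positive Rc p"
  using S_all[OF K k Sk] BC_from_S by blast



definition hpI :: "'a set \<Rightarrow> ('a \<Rightarrow> complex) \<Rightarrow> ('a \<Rightarrow> complex) \<Rightarrow> complex" where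
  "hpI I u v = (\<Sum>x\<in>I. u x * cnj (v x))"

definition orthI :: "'a set \<Rightarrow> nat \<Rightarrow> (nat \<Rightarrow> 'a \<Rightarrow> complex) \<Rightarrow> bool" where
  "orthI I m F \<longleftrightarrow> (\<forall>a<m. \<forall>b<m. hpI I (F a) (F b) = (if a = b then 1 else 0))"

lemma herm_hpI: "herm = hpI UNIV"
  unfolding herm_def[abs_def] hpI_def[abs_def] ..

lemma unitary_frame_orthI: "unitary_frame m E = orthI UNIV m E"
  unfolding unitary_frame_def orthI_def herm_hpI ..

lemma hpI_lin1: "hpI I (\<lambda>x. \<Sum>a\<in>A. c a * f a x) Y = (\<Sum>a\<in>A. c a * hpI I (f a) Y)"
  unfolding hpI_def by (simp add: sum_distrib_left sum_distrib_right mult_ac sum.swap[of _ I])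

lemma hpI_lin2: "hpI I X (\<lambda>x. \<Sum>a\<in>A. c a * f a x) = (\<Sum>a\<in>A. cnj (c a) * hpI I X (f a))"
  unfolding hpI_def by (simp add: sum_distrib_left sum_distrib_right mult_ac sum.swap[of _ I])

lemma hpI_cnj: "cnj (hpI I X Y) = hpI I Y X"
  unfolding hpI_def cnj_sum by (simp add: mult.commute)

lemma hpI_diff1: "hpI I (\<lambda>x. u x - v x) Y = hpI I u Y - hpI I v Y"
  unfolding hpI_def by (simp add: sum_subtractf left_diff_distrib)

lemma hpI_diff2: "hpI I X (\<lambda>x. u x - v x) = hpI I X u - hpI I X v"
  unfolding hpI_def by (simp add: sum_subtractf right_diff_distrib)

lemma hpI_scale1: "hpI I (\<lambda>x. c * u x) Y = c * hpI I u Y"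
  unfolding hpI_def by (simp add: sum_distrib_left mult_ac)

lemma hpI_scale2: "hpI I X (\<lambda>x. c * u x) = cnj c * hpI I X u"
  unfolding hpI_def by (simp add: sum_distrib_left mult_ac)

lemma hpI_delta1: "x \<in> I \<Longrightarrow> finite I \<Longrightarrow> hpI I (\<lambda>y. if y = x then 1 else 0) v = cnj (v x)"
proof -
  assume "x \<in> I" "finite I"
  have "hpI I (\<lambda>y. if y = x then 1 else 0) v = (\<Sum>y\<in>I. if y = x then cnj (v y) else 0)"
    unfolding hpI_def by (rule sum.cong) auto
  then show ?thesis using \<open>x \<in> I\<close> \<open>finite I\<close> by simp
qed

lemma hpI_self_real: "hpI I u u = of_real (\<Sum>x\<in>I. (cmod (u x))^2)"
  unfolding hpI_def by (simp only: of_real_sum complex_norm_square)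

lemma orth_comb: assumes "orthI I m F" "b < m"
  shows "(\<Sum>a<m. c a * hpI I (F a) (F b)) = c b"
proof -
  have "(\<Sum>a<m. c a * hpI I (F a) (F b)) = (\<Sum>a<m. if a = b then c a else 0)"
    using assms unfolding orthI_def by (intro sum.cong) auto
  then show ?thesis using assms(2) by simp
qed

lemma ext_one: assumes I: "finite I" and F: "orthI I m F" and mc: "m < card I"
  shows "\<exists>w. hpI I w w = 1 \<and> (\<forall>a<m. hpI I w (F a) = 0)"
proof -
  define r where "r = (\<lambda>x. \<Sum>a<m. (cmod (F a x))^2)"
  have "(\<Sum>x\<in>I. r x) = (\<Sum>a<m. \<Sum>x\<in>I. (cmod (F a x))^2)" unfolding r_def by (rule sum.swap)
  also have "\<dots> = (\<Sum>a<m. 1)"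
  proof (rule sum.cong[OF refl])
    fix a assume "a \<in> {..<m}"
    then have "hpI I (F a) (F a) = 1" using F unfolding orthI_def by simp
    then have "of_real (\<Sum>x\<in>I. (cmod (F a x))^2) = (1::complex)" unfolding hpI_self_real .
    then show "(\<Sum>x\<in>I. (cmod (F a x))^2) = 1" by (simp only: of_real_eq_1_iff)
  qed
  finally have sr: "(\<Sum>x\<in>I. r x) = real m" by simp
  obtain x where x: "x \<in> I" "r x < 1"
  proof (rule ccontr)
    assume "\<not> thesis"
    then have "\<forall>x\<in>I. r x \<ge> 1" using that by force
    then have "(\<Sum>x\<in>I. r x) \<ge> (\<Sum>x\<in>I. 1)" by (intro sum_mono) auto
    then show False using sr mc by simp
  qed
  define e where "e = (\<lambda>y. if y = x then 1 else (0::complex))"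
  define g where "g = (\<lambda>y. e y - (\<Sum>a<m. cnj (F a x) * F a y))"
  have ge: "hpI I g (F b) = 0" if "b < m" for b
  proof -
    have "hpI I g (F b) = hpI I e (F b) - (\<Sum>a<m. cnj (F a x) * hpI I (F a) (F b))"
      unfolding g_def hpI_diff1 hpI_lin1 ..
    also have "\<dots> = 0" using orth_comb[OF F that] hpI_delta1[OF x(1) I] unfolding e_def by simp
    finally show ?thesis .
  qed
  have "hpI I g g = hpI I g e - (\<Sum>a<m. cnj (cnj (F a x)) * hpI I g (F a))"
    by (subst (2) g_def) (simp only: hpI_diff2 hpI_lin2)
  also have "(\<Sum>a<m. cnj (cnj (F a x)) * hpI I g (F a)) = 0" using ge by simp
  also have "hpI I g e = g x"
  proof -
    have "hpI I g e = (\<Sum>y\<in>I. if y = x then g y else 0)" unfolding hpI_def e_def by (rule sum.cong) auto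
    then show ?thesis using x(1) I by simp
  qed
  also have "g x = 1 - (\<Sum>a<m. F a x * cnj (F a x))" unfolding g_def e_def by (simp add: mult.commute)
  also have "(\<Sum>a<m. F a x * cnj (F a x)) = of_real (r x)" unfolding r_def by (simp only: of_real_sum complex_norm_square)
  finally have gg: "hpI I g g = of_real (1 - r x)" by simp
  define w where "w = (\<lambda>y. of_real (1 / sqrt (1 - r x)) * g y)"
  have pos: "1 - r x > 0" using x by simp
  have "hpI I w w = of_real (1 / sqrt (1 - r x)) * of_real (1 / sqrt (1 - r x)) * hpI I g g"
    unfolding w_def hpI_scale1 hpI_scale2 by simp
  also have "\<dots> = 1" unfolding gg using pos
    by (simp flip: of_real_mult)
  finally have "hpI I w w = 1" .
  moreover have "\<forall>a<m. hpI I w (F a) = 0" unfolding w_def hpI_scale1 using ge by simp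
  ultimately show ?thesis by blast
qed

lemma ext_full: assumes I: "finite I" and n: "n \<le> card I" and mn: "m \<le> n" and F: "orthI I m F"
  shows "\<exists>G. orthI I n G \<and> (\<forall>a<m. G a = F a)"
  using mn n
proof (induction n rule: dec_induct)
  case base
  then show ?case using F by blast
next
  case (step n)
  then obtain G where G: "orthI I n G" "\<forall>a<m. G a = F a" by auto
  obtain w where w: "hpI I w w = 1" "\<forall>a<n. hpI I w (G a) = 0"
    using ext_one[OF I G(1)] step by auto
  define G' where "G' = G(n := w)"
  have "orthI I (Suc n) G'"
    unfolding orthI_def
  proof (intro allI impI)
    fix a b assume ab: "a < Suc n" "b < Suc n"
    show "hpI I (G' a) (G' b) = (if a = b then 1 else 0)"
    proof (cases "a = n"; cases "b = n")
      assume "a = n" "b = n" then show ?thesis using w G'_def by simp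
    next
      assume "a = n" "b \<noteq> n" then show ?thesis using w ab G'_def by simp
    next
      assume "a \<noteq> n" "b = n" then show ?thesis using w ab G'_def hpI_cnj[of I w "G a"] by simp
    next
      assume "a \<noteq> n" "b \<noteq> n" then show ?thesis using G(1) ab G'_def unfolding orthI_def by simp
    qed
  qed
  moreover have "\<forall>a<m. G' a = F a" using G(2) step G'_def by simp
  ultimately show ?case by blast
qed



definition Mv :: "complex mat \<Rightarrow> nat \<Rightarrow> (nat \<Rightarrow> complex) \<Rightarrow> (nat \<Rightarrow> complex)" where
  "Mv M k v = (\<lambda>x. \<Sum>y<k. M $$ (x, y) * v y)"

definition herm_mat :: "complex mat \<Rightarrow> nat \<Rightarrow> bool" where
  "herm_mat M k \<longleftrightarrow> M \<in> carrier_mat k k \<and> (\<forall>i<k. \<forall>j<k. M $$ (i, j) = cnj (M $$ (j, i)))"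

lemma sprod_sum: "v \<in> carrier_vec k \<Longrightarrow> w \<in> carrier_vec k \<Longrightarrow> v \<bullet> w = (\<Sum>i<k. v $ i * w $ i)"
  unfolding scalar_prod_def by (simp add: atLeast0LessThan)

lemma complete: assumes f: "orthI {..<k} k f" and xy: "x < k" "y < k"
  shows "(\<Sum>a<k. f a x * cnj (f a y)) = (if x = y then 1 else 0)"
proof -
  define P where "P = mat k k (\<lambda>(x, a). f a x)"
  define Q where "Q = mat k k (\<lambda>(a, y). cnj (f a y))"
  have P: "P \<in> carrier_mat k k" and Q: "Q \<in> carrier_mat k k" unfolding P_def Q_def by auto
  have "Q * P = 1\<^sub>m k"
  proof (rule eq_matI)
    fix a b assume ab: "a < dim_row (1\<^sub>m k)" "b < dim_col (1\<^sub>m k)"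
    then have "(Q * P) $$ (a, b) = (\<Sum>x<k. cnj (f a x) * f b x)"
      using P Q by (simp add: index_mult_mat sprod_sum Q_def P_def)
    also have "\<dots> = hpI {..<k} (f b) (f a)" unfolding hpI_def by (simp add: mult.commute)
    also have "\<dots> = 1\<^sub>m k $$ (a, b)" using f ab unfolding orthI_def by auto
    finally show "(Q * P) $$ (a, b) = 1\<^sub>m k $$ (a, b)" .
  qed (use P Q in auto)
  then have PQ: "P * Q = 1\<^sub>m k" using mat_mult_left_right_inverse[OF Q P] by simp
  have "(P * Q) $$ (x, y) = (\<Sum>a<k. f a x * cnj (f a y))"
    using P Q xy by (simp add: index_mult_mat sprod_sum Q_def P_def)
  then show ?thesis using PQ xy by simp
qed

lemma expand: assumes f: "orthI {..<k} k f" and x: "x < k"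
  shows "v x = (\<Sum>a<k. hpI {..<k} v (f a) * f a x)"
proof -
  have "(\<Sum>a<k. hpI {..<k} v (f a) * f a x) = (\<Sum>a<k. \<Sum>y<k. v y * (f a x * cnj (f a y)))"
    unfolding hpI_def by (simp add: sum_distrib_left sum_distrib_right mult_ac)
  also have "\<dots> = (\<Sum>y<k. v y * (\<Sum>a<k. f a x * cnj (f a y)))"
    by (subst sum.swap) (simp add: sum_distrib_left)
  also have "\<dots> = (\<Sum>y<k. if y = x then v y else 0)"
    by (rule sum.cong[OF refl]) (use complete[OF f x] in auto)
  also have "\<dots> = v x" using x by simp
  finally show ?thesis ..
qed

lemma Mv_adj: assumes H: "herm_mat M k"
  shows "hpI {..<k} (Mv M k u) v = hpI {..<k} u (Mv M k v)"
proof -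
  have "hpI {..<k} (Mv M k u) v = (\<Sum>x<k. \<Sum>y<k. M $$ (x, y) * u y * cnj (v x))"
    unfolding hpI_def Mv_def by (simp only: sum_distrib_right)
  also have "\<dots> = (\<Sum>y<k. \<Sum>x<k. M $$ (x, y) * u y * cnj (v x))" by (rule sum.swap)
  also have "\<dots> = (\<Sum>y<k. \<Sum>x<k. u y * cnj (M $$ (y, x) * v x))"
  proof (intro sum.cong refl)
    fix x y assume "y \<in> {..<k}" "x \<in> {..<k}"
    then have "M $$ (x, y) = cnj (M $$ (y, x))" using H unfolding herm_mat_def lessThan_iff by blast
    then show "M $$ (x, y) * u y * cnj (v x) = u y * cnj (M $$ (y, x) * v x)" by simp
  qed
  also have "\<dots> = hpI {..<k} u (Mv M k v)"
    unfolding hpI_def Mv_def cnj_sum by (simp only: sum_distrib_left complex_cnj_mult mult.assoc)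
  finally show ?thesis .
qed

lemma Mv_lin: "Mv M k (\<lambda>x. \<Sum>b\<in>B. c b * g b x) x = (\<Sum>b\<in>B. c b * Mv M k (g b) x)"
  unfolding Mv_def sum_distrib_left by (subst sum.swap) (simp add: mult_ac)

lemma Mv_scale: "Mv M k (\<lambda>x. c * g x) x = c * Mv M k g x"
  unfolding Mv_def by (simp add: sum_distrib_left mult_ac)



lemma sum_split_shift: fixes g :: "nat \<Rightarrow> complex" assumes "j \<le> k"
  shows "(\<Sum>a<k. g a) = (\<Sum>a<j. g a) + (\<Sum>a<k-j. g (a + j))"
proof -
  obtain d where k: "k = j + d" using assms le_Suc_ex by blast
  have "(\<Sum>a<j + d. g a) = (\<Sum>a<j. g a) + (\<Sum>a<d. g (a + j))"
    by (induction d) (simp_all add: add.commute add.left_commute)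
  then show ?thesis using k by simp
qed

lemma mulvec_comp: assumes C: "C \<in> carrier_mat n n" and c: "c \<in> carrier_vec n" and a: "a < n"
  shows "(C *\<^sub>v c) $ a = (\<Sum>b<n. C $$ (a, b) * c $ b)"
  using C c a by (simp add: sprod_sum[of _ n] row_def)

lemma vec_nz: assumes "c \<in> carrier_vec n" "c \<noteq> 0\<^sub>v n" shows "\<exists>b<n. c $ b \<noteq> 0"
  using assms by (metis carrier_vecD eq_vecI index_zero_vec(1) index_zero_vec(2))

lemma exists_eigen: fixes C :: "complex mat" assumes C: "C \<in> carrier_mat n n" and n: "n > 0"
  shows "\<exists>e c. c \<in> carrier_vec n \<and> c \<noteq> 0\<^sub>v n \<and> C *\<^sub>v c = e \<cdot>\<^sub>v c"
proof -
  obtain as where as: "char_poly C = (\<Prod>a\<leftarrow>as. [:- a, 1:])" "length as = n"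
    using char_poly_factorized[OF C] by auto
  then obtain e as' where "as = e # as'" using n by (cases as) auto
  then have "poly (char_poly C) e = 0" using as(1) by simp
  then have "eigenvalue C e" using eigenvalue_root_char_poly[OF C] by simp
  then obtain c where "eigenvector C c e" unfolding eigenvalue_def by blast
  then show ?thesis unfolding eigenvector_def using C by auto
qed

lemma eig_step:
  assumes H: "herm_mat M k" and j: "j < k" and u: "orthI {..<k} j u"
    and ev: "\<And>i x. i < j \<Longrightarrow> x < k \<Longrightarrow> Mv M k (u i) x = \<mu> i * u i x"
  shows "\<exists>w e. hpI {..<k} w w = 1 \<and> (\<forall>i<j. hpI {..<k} w (u i) = 0) \<and> (\<forall>x<k. Mv M k w x = e * w x) \<and> cnj e = e"
proof -
  let ?I = "{..<k} :: nat set"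
  obtain f where f: "orthI ?I k f" and fu: "\<forall>a<j. f a = u a"
    using ext_full[of ?I k j u] j u by auto
  have forth: "hpI ?I (f a) (f b) = (if a = b then 1 else 0)" if "a < k" "b < k" for a b
    using f that unfolding orthI_def by blast
  define n where "n = k - j"
  have n0: "n > 0" using j unfolding n_def by simp
  define C where "C = mat n n (\<lambda>(a, b). hpI ?I (Mv M k (f (b + j))) (f (a + j)))"
  have Cc: "C \<in> carrier_mat n n" unfolding C_def by simp
  obtain e c where c: "c \<in> carrier_vec n" "c \<noteq> 0\<^sub>v n" "C *\<^sub>v c = e \<cdot>\<^sub>v c"
    using exists_eigen[OF Cc n0] by blast
  have ceq: "(\<Sum>b<n. C $$ (a, b) * c $ b) = e * c $ a" if "a < n" for a
  proof -
    have "(C *\<^sub>v c) $ a = (e \<cdot>\<^sub>v c) $ a" using c(3) by simp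
    then show ?thesis using mulvec_comp[OF Cc c(1) that] c(1) that by simp
  qed
  define w where "w = (\<lambda>x. \<Sum>b<n. c $ b * f (b + j) x)"
  have wf: "hpI ?I w (f (a + j)) = c $ a" if "a < n" for a
  proof -
    have "hpI ?I w (f (a + j)) = (\<Sum>b<n. c $ b * hpI ?I (f (b + j)) (f (a + j)))"
      unfolding w_def hpI_lin1 ..
    also have "\<dots> = (\<Sum>b<n. if b = a then c $ b else 0)"
      using that unfolding n_def by (intro sum.cong refl) (simp add: forth)
    also have "\<dots> = c $ a" using that by simp
    finally show ?thesis .
  qed
  have wu: "hpI ?I w (u i) = 0" if "i < j" for i
  proof -
    have "hpI ?I w (u i) = (\<Sum>b<n. c $ b * hpI ?I (f (b + j)) (f i))"
      unfolding w_def hpI_lin1 using fu that by simp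
    also have "\<dots> = 0"
      using that j unfolding n_def by (intro sum.neutral) (simp add: forth)
    finally show ?thesis .
  qed
  define s where "s = (\<Sum>b<n. (cmod (c $ b))^2)"
  have ww: "hpI ?I w w = of_real s"
  proof -
    have "hpI ?I w w = (\<Sum>b<n. cnj (c $ b) * hpI ?I w (f (b + j)))"
      by (subst (2) w_def) (simp only: hpI_lin2)
    also have "\<dots> = (\<Sum>b<n. c $ b * cnj (c $ b))"
      by (intro sum.cong refl) (simp add: wf mult.commute)
    also have "\<dots> = of_real s" unfolding s_def by (simp only: of_real_sum complex_norm_square)
    finally show ?thesis .
  qed
  have s0: "s > 0"
  proof -
    obtain b where b: "b < n" "c $ b \<noteq> 0" using vec_nz[OF c(1,2)] by blast
    have "(cmod (c $ b))^2 \<le> s" unfolding s_def using b(1)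
      by (intro member_le_sum) auto
    moreover have "(cmod (c $ b))^2 > 0" using b(2) by simp
    ultimately show ?thesis by linarith
  qed
  have Mf: "Mv M k (f (b + j)) x = (\<Sum>a<n. C $$ (a, b) * f (a + j) x)" if "b < n" "x < k" for b x
  proof -
    have "Mv M k (f (b + j)) x = (\<Sum>a<k. hpI ?I (Mv M k (f (b + j))) (f a) * f a x)"
      by (rule expand[OF f that(2)])
    also have "\<dots> = (\<Sum>a<j. hpI ?I (Mv M k (f (b + j))) (f a) * f a x) +
        (\<Sum>a<n. hpI ?I (Mv M k (f (b + j))) (f (a + j)) * f (a + j) x)"
      unfolding n_def by (rule sum_split_shift) (use j in simp)
    also have "(\<Sum>a<j. hpI ?I (Mv M k (f (b + j))) (f a) * f a x) = 0"
    proof (intro sum.neutral ballI)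
      fix a assume "a \<in> {..<j}"
      then have a: "a < j" by simp
      have "hpI ?I (Mv M k (f (b + j))) (f a) = hpI ?I (f (b + j)) (Mv M k (u a))"
        using Mv_adj[OF H] fu a by simp
      also have "\<dots> = hpI ?I (f (b + j)) (\<lambda>x. \<mu> a * u a x)"
        unfolding hpI_def using ev[OF a] by (intro sum.cong refl) simp
      also have "\<dots> = cnj (\<mu> a) * hpI ?I (f (b + j)) (f a)" unfolding hpI_scale2 using fu a by simp
      also have "\<dots> = 0" using a j that unfolding n_def by (simp add: forth)
      finally show "hpI ?I (Mv M k (f (b + j))) (f a) * f a x = 0" by simp
    qed
    also have "(\<Sum>a<n. hpI ?I (Mv M k (f (b + j))) (f (a + j)) * f (a + j) x) = (\<Sum>a<n. C $$ (a, b) * f (a + j) x)"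
      unfolding C_def using that by (intro sum.cong refl) simp
    finally show ?thesis by simp
  qed
  have Mw: "Mv M k w x = e * w x" if x: "x < k" for x
  proof -
    have "Mv M k w x = (\<Sum>b<n. c $ b * Mv M k (f (b + j)) x)" unfolding w_def Mv_lin ..
    also have "\<dots> = (\<Sum>b<n. c $ b * (\<Sum>a<n. C $$ (a, b) * f (a + j) x))"
      by (intro sum.cong refl) (simp add: Mf x)
    also have "\<dots> = (\<Sum>a<n. (\<Sum>b<n. C $$ (a, b) * c $ b) * f (a + j) x)"
      by (simp add: sum_distrib_left sum_distrib_right mult_ac) (rule sum.swap)
    also have "\<dots> = (\<Sum>a<n. e * c $ a * f (a + j) x)"
      by (intro sum.cong refl) (simp add: ceq)
    also have "\<dots> = e * w x" unfolding w_def by (simp add: sum_distrib_left mult_ac)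
    finally show ?thesis .
  qed
  have ereal: "cnj e = e"
  proof -
    have "hpI ?I (Mv M k w) w = e * hpI ?I w w"
    proof -
      have "hpI ?I (Mv M k w) w = hpI ?I (\<lambda>x. e * w x) w"
        unfolding hpI_def by (intro sum.cong refl) (simp add: Mw)
      then show ?thesis by (simp add: hpI_scale1)
    qed
    moreover have "hpI ?I w (Mv M k w) = cnj e * hpI ?I w w"
    proof -
      have "hpI ?I w (Mv M k w) = hpI ?I w (\<lambda>x. e * w x)"
        unfolding hpI_def by (intro sum.cong refl) (simp add: Mw)
      then show ?thesis by (simp add: hpI_scale2)
    qed
    ultimately have "e * of_real s = cnj e * of_real s" using Mv_adj[OF H, of w w] ww by metis
    moreover have "(of_real s :: complex) \<noteq> 0" using s0 by simp
    ultimately show ?thesis by (metis mult_cancel_right)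
  qed
  define w' where "w' = (\<lambda>x. of_real (1 / sqrt s) * w x)"
  have "hpI ?I w' w' = of_real (1 / sqrt s) * of_real (1 / sqrt s) * of_real s"
    unfolding w'_def hpI_scale1 hpI_scale2 ww by simp
  also have "\<dots> = 1" using s0 by (simp flip: of_real_mult)
  finally have n1: "hpI ?I w' w' = 1" .
  have o1: "\<forall>i<j. hpI ?I w' (u i) = 0" unfolding w'_def hpI_scale1 using wu by simp
  have e1: "\<forall>x<k. Mv M k w' x = e * w' x" unfolding w'_def Mv_scale using Mw by simp
  show ?thesis using n1 o1 e1 ereal by blast
qed



lemma spectral_ind:
  assumes H: "herm_mat M k" and j: "j \<le> k"
  shows "\<exists>u \<mu>. orthI {..<k} j u \<and> (\<forall>i<j. \<forall>x<k. Mv M k (u i) x = \<mu> i * u i x) \<and> (\<forall>i<j. cnj (\<mu> i) = \<mu> i)"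
  using j
proof (induction j)
  case 0
  then show ?case unfolding orthI_def by auto
next
  case (Suc j)
  then obtain u \<mu> where u: "orthI {..<k} j u" and ev: "\<forall>i<j. \<forall>x<k. Mv M k (u i) x = \<mu> i * u i x"
    and re: "\<forall>i<j. cnj (\<mu> i) = \<mu> i" by auto
  obtain w e where w: "hpI {..<k} w w = 1" "\<forall>i<j. hpI {..<k} w (u i) = 0"
    "\<forall>x<k. Mv M k w x = e * w x" "cnj e = e"
    using eig_step[OF H _ u, of \<mu>] ev Suc by auto
  define u' where "u' = u(j := w)"
  define \<mu>' where "\<mu>' = \<mu>(j := e)"
  have "orthI {..<k} (Suc j) u'"
    unfolding orthI_def
  proof (intro allI impI)
    fix a b assume ab: "a < Suc j" "b < Suc j"
    show "hpI {..<k} (u' a) (u' b) = (if a = b then 1 else 0)"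
    proof (cases "a = j"; cases "b = j")
      assume "a = j" "b = j" then show ?thesis using w u'_def by simp
    next
      assume "a = j" "b \<noteq> j" then show ?thesis using w ab u'_def by simp
    next
      assume "a \<noteq> j" "b = j" then show ?thesis using w ab u'_def hpI_cnj[of "{..<k}" w "u a"] by simp
    next
      assume "a \<noteq> j" "b \<noteq> j" then show ?thesis using u ab u'_def unfolding orthI_def by simp
    qed
  qed
  moreover have "\<forall>i<Suc j. \<forall>x<k. Mv M k (u' i) x = \<mu>' i * u' i x"
    using ev w(3) unfolding u'_def \<mu>'_def by (auto simp: less_Suc_eq)
  moreover have "\<forall>i<Suc j. cnj (\<mu>' i) = \<mu>' i"
    using re w(4) unfolding \<mu>'_def by (auto simp: less_Suc_eq)
  ultimately show ?case by blast
qed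

lemma spectral_entry:
  assumes u: "orthI {..<k} k u" and ev: "\<forall>i<k. \<forall>x<k. Mv M k (u i) x = \<mu> i * u i x"
    and xy: "x < k" "y < k"
  shows "M $$ (x, y) = (\<Sum>i<k. \<mu> i * u i x * cnj (u i y))"
proof -
  have "(\<Sum>i<k. \<mu> i * u i x * cnj (u i y)) = (\<Sum>i<k. (\<Sum>z<k. M $$ (x, z) * u i z) * cnj (u i y))"
    using ev xy unfolding Mv_def by (intro sum.cong refl) simp
  also have "\<dots> = (\<Sum>z<k. M $$ (x, z) * (\<Sum>i<k. u i z * cnj (u i y)))"
    by (simp add: sum_distrib_left sum_distrib_right mult_ac) (rule sum.swap)
  also have "\<dots> = (\<Sum>z<k. if z = y then M $$ (x, z) else 0)"
    by (intro sum.cong refl) (use complete[OF u _ xy(2)] in auto)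
  also have "\<dots> = M $$ (x, y)" using xy by simp
  finally show ?thesis ..
qed

lemma proots_linear_prod: "proots (\<Prod>a\<leftarrow>as. [:- a, 1:]) = mset (as :: complex list)"
proof -
  have "0 \<notin> set (map (\<lambda>a. [:- a, 1:]) as)" by auto
  then have "proots (\<Prod>p\<leftarrow>map (\<lambda>a. [:- a, 1:]) as. p) = sum_list (map proots (map (\<lambda>a. [:- a, 1:]) as))"
    by (rule proots_prod_list)
  also have "\<dots> = mset as" by (induction as) (simp_all add: proots_linear_factor)
  finally show ?thesis by (simp add: comp_def)
qed

lemma spectral_charpoly:
  assumes Mc: "M \<in> carrier_mat k k" and u: "orthI {..<k} k u"
    and ev: "\<forall>i<k. \<forall>x<k. Mv M k (u i) x = \<mu> i * u i x"
  shows "char_poly M = (\<Prod>a\<leftarrow>map \<mu> [0..<k]. [:- a, 1:])"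
proof -
  define P where "P = mat k k (\<lambda>(x, i). u i x)"
  define Q where "Q = mat k k (\<lambda>(i, y). cnj (u i y))"
  define D where "D = mat k k (\<lambda>(i, j). if i = j then \<mu> i else 0)"
  have P: "P \<in> carrier_mat k k" and Q: "Q \<in> carrier_mat k k" and D: "D \<in> carrier_mat k k"
    unfolding P_def Q_def D_def by auto
  have PQ: "P * Q = 1\<^sub>m k"
  proof (rule eq_matI)
    fix x y assume xy: "x < dim_row (1\<^sub>m k)" "y < dim_col (1\<^sub>m k)"
    then have "(P * Q) $$ (x, y) = (\<Sum>i<k. u i x * cnj (u i y))"
      using P Q by (simp add: index_mult_mat sprod_sum P_def Q_def)
    then show "(P * Q) $$ (x, y) = 1\<^sub>m k $$ (x, y)" using complete[OF u] xy by simp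
  qed (use P Q in auto)
  have QP: "Q * P = 1\<^sub>m k" using mat_mult_left_right_inverse[OF P Q PQ] .
  have PD: "(P * D) $$ (x, i) = u i x * \<mu> i" if "x < k" "i < k" for x i
  proof -
    have "(P * D) $$ (x, i) = (\<Sum>a<k. u a x * (if a = i then \<mu> a else 0))"
      using that P D by (simp add: index_mult_mat sprod_sum P_def D_def)
    also have "\<dots> = (\<Sum>a<k. if a = i then u a x * \<mu> a else 0)" by (intro sum.cong refl) simp
    finally show ?thesis using that by simp
  qed
  have MPDQ: "M = P * D * Q"
  proof (rule eq_matI)
    fix x y assume xy: "x < dim_row (P * D * Q)" "y < dim_col (P * D * Q)"
    then have xy': "x < k" "y < k" using P Q by auto
    have "(P * D * Q) $$ (x, y) = (\<Sum>i<k. (P * D) $$ (x, i) * cnj (u i y))"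
      using xy' P Q D by (simp add: index_mult_mat sprod_sum Q_def)
    also have "\<dots> = (\<Sum>i<k. \<mu> i * u i x * cnj (u i y))"
      using xy' by (intro sum.cong refl) (simp add: PD mult_ac)
    also have "\<dots> = M $$ (x, y)" using spectral_entry[OF u ev xy'] ..
    finally show "M $$ (x, y) = (P * D * Q) $$ (x, y)" ..
  qed (use Mc P Q D in auto)
  have "similar_mat_wit M D P Q"
    unfolding similar_mat_wit_def Let_def using Mc P Q D PQ QP MPDQ by auto
  then have "similar_mat M D" unfolding similar_mat_def by blast
  then have "char_poly M = char_poly D" by (rule char_poly_similar)
  also have "char_poly D = (\<Prod>a\<leftarrow>diag_mat D. [:- a, 1:])"
    by (rule char_poly_upper_triangular[OF D]) (simp add: upper_triangular_def D_def)
  also have "diag_mat D = map \<mu> [0..<k]"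
    unfolding diag_mat_def D_def by (intro nth_equalityI) auto
  finally show ?thesis .
qed



lemma sum_split_shift_gen: fixes g :: "nat \<Rightarrow> 'b::comm_monoid_add" assumes "j \<le> k"
  shows "(\<Sum>a<k. g a) = (\<Sum>a<j. g a) + (\<Sum>a<k-j. g (a + j))"
proof -
  obtain d where k: "k = j + d" using assms le_Suc_ex by blast
  have "(\<Sum>a<j + d. g a) = (\<Sum>a<j. g a) + (\<Sum>a<d. g (a + j))"
    by (induction d) (simp_all add: ac_simps)
  then show ?thesis using k by simp
qed

lemma sum_list_map_mset: fixes g :: "'a \<Rightarrow> real" shows "mset xs = mset ys \<Longrightarrow> sum_list (map g xs) = sum_list (map g ys)"
proof -
  assume "mset xs = mset ys"
  then have "mset (map g xs) = mset (map g ys)" by simp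
  then have "sum_mset (mset (map g xs)) = sum_mset (mset (map g ys))" by simp
  then show ?thesis by (simp only: sum_mset_sum_list)
qed

lemma sum_list_nth: "sum_list (map g xs) = (\<Sum>j<length xs. g (xs ! j))"
  by (simp add: sum_list_sum_nth atLeast0LessThan)

lemma pointwise_bound: fixes x w t :: real assumes "0 \<le> w" "w \<le> 1"
  shows "x * w \<ge> min (x - t) 0 + t * w"
proof (cases "x \<ge> t")
  case True
  then have "(x - t) * w \<ge> 0" using assms by simp
  then show ?thesis by (simp add: algebra_simps)
next
  case False
  then have "(x - t) * 1 \<le> (x - t) * w" using assms by (intro mult_left_mono_neg) auto
  then show ?thesis using False by (simp add: algebra_simps)
qed

lemma list_ineq:
  fixes lam w :: "nat \<Rightarrow> real"
  assumes L: "L = sort (map lam [0..<k])" and l: "1 \<le> l" "l \<le> p" "p \<le> k"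
    and w: "\<And>i. i < k \<Longrightarrow> 0 \<le> w i \<and> w i \<le> 1" and ws: "(\<Sum>i<k. w i) = real p"
    and pos: "sum_list (take l L) > 0"
  shows "(\<Sum>i<k. lam i * w i) > 0"
proof -
  have len: "length L = k" using L by simp
  have sL: "sorted L" using L by simp
  have mL: "mset L = mset (map lam [0..<k])" using L by simp
  define t where "t = L ! (l - 1)"
  have st: "sum_list (take l L) = (\<Sum>j<l. L ! j)"
    using sum_list_nth[of "\<lambda>x. x" "take l L"] len l by simp
  have tge: "L ! j \<le> t" if "j < l" for j
    unfolding t_def using that l len by (intro sorted_nth_mono[OF sL]) auto
  have tle: "t \<le> L ! j" if "l \<le> j" "j < k" for j
    unfolding t_def using that l len by (intro sorted_nth_mono[OF sL]) auto
  have "(\<Sum>j<l. L ! j) \<le> (\<Sum>j<l. t)" by (intro sum_mono) (simp add: tge)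
  then have "sum_list (take l L) \<le> real l * t" using st by simp
  then have "real l * t > 0" using pos by linarith
  then have tpos: "t > 0" using l by (simp add: zero_less_mult_iff)
  define g where "g = (\<lambda>x. min (x - t) (0::real))"
  have "(\<Sum>i<k. g (lam i)) = sum_list (map g (map lam [0..<k]))"
    using sum_list_nth[of g "map lam [0..<k]"] by simp
  also have "\<dots> = sum_list (map g L)" using sum_list_map_mset[OF mL[symmetric]] .
  also have "\<dots> = (\<Sum>j<k. g (L ! j))" using sum_list_nth[of g L] len by simp
  also have "\<dots> = (\<Sum>j<l. g (L ! j)) + (\<Sum>j<k - l. g (L ! (j + l)))"
    by (rule sum_split_shift_gen) (use l in simp)
  also have "(\<Sum>j<k - l. g (L ! (j + l))) = 0"
    by (intro sum.neutral ballI) (simp add: g_def tle)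
  also have "(\<Sum>j<l. g (L ! j)) = (\<Sum>j<l. L ! j - t)"
    by (intro sum.cong refl) (simp add: g_def tge)
  finally have sg: "(\<Sum>i<k. g (lam i)) = sum_list (take l L) - real l * t"
    using st by (simp add: sum_subtractf)
  have "(\<Sum>i<k. lam i * w i) \<ge> (\<Sum>i<k. g (lam i) + t * w i)"
    unfolding g_def by (intro sum_mono pointwise_bound) (use w in auto)
  also have "(\<Sum>i<k. g (lam i) + t * w i) = sum_list (take l L) - real l * t + t * real p"
    by (simp add: sum.distrib sg sum_distrib_left[symmetric] ws)
  finally have "(\<Sum>i<k. lam i * w i) \<ge> sum_list (take l L) + (real p - real l) * t"
    by (simp add: algebra_simps)
  moreover have "(real p - real l) * t \<ge> 0" using l tpos by simp
  ultimately show ?thesis using pos by linarith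
qed



lemma real_of_cnj: "cnj z = z \<Longrightarrow> z = of_real (Re z)"
  by (simp add: complex_eq_iff)

lemma KF: assumes H: "herm_mat M k" and l: "1 \<le> l" "l \<le> p" "p \<le> k"
  and pos: "sum_list (take l (sorted_list_of_multiset (image_mset Re (proots (char_poly M))))) > 0"
  shows "(\<Sum>j<p. Re (M $$ (j, j))) > 0"
proof -
  obtain u \<mu> where u: "orthI {..<k} k u" and ev: "\<forall>i<k. \<forall>x<k. Mv M k (u i) x = \<mu> i * u i x"
    and re: "\<forall>i<k. cnj (\<mu> i) = \<mu> i"
    using spectral_ind[OF H, of k] by auto
  have Mc: "M \<in> carrier_mat k k" using H unfolding herm_mat_def by simp
  define lam where "lam = (\<lambda>i. Re (\<mu> i))"
  have "proots (char_poly M) = mset (map \<mu> [0..<k])"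
    unfolding spectral_charpoly[OF Mc u ev] proots_linear_prod ..
  then have R: "image_mset Re (proots (char_poly M)) = mset (map lam [0..<k])"
    unfolding lam_def by (simp add: multiset.map_comp comp_def)
  have Ls: "sorted_list_of_multiset (image_mset Re (proots (char_poly M))) = sort (map lam [0..<k])"
    unfolding R sorted_list_of_multiset_mset ..
  define w where "w = (\<lambda>i. \<Sum>j<p. (cmod (u i j))^2)"
  have diag: "Re (M $$ (j, j)) = (\<Sum>i<k. lam i * (cmod (u i j))^2)" if "j < k" for j
  proof -
    have "M $$ (j, j) = (\<Sum>i<k. \<mu> i * (u i j * cnj (u i j)))"
      using spectral_entry[OF u ev that that] by (simp add: mult_ac)
    also have "\<dots> = (\<Sum>i<k. of_real (lam i * (cmod (u i j))^2))"
    proof (intro sum.cong refl)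
      fix i assume "i \<in> {..<k}"
      then have "\<mu> i = of_real (lam i)" using re real_of_cnj unfolding lam_def by auto
      then show "\<mu> i * (u i j * cnj (u i j)) = of_real (lam i * (cmod (u i j))^2)"
        by (simp only: complex_norm_square[symmetric] of_real_mult)
    qed
    finally show ?thesis by (simp only: of_real_sum[symmetric] Re_complex_of_real)
  qed
  have "(\<Sum>j<p. Re (M $$ (j, j))) = (\<Sum>j<p. \<Sum>i<k. lam i * (cmod (u i j))^2)"
    using l by (intro sum.cong refl) (simp add: diag)
  also have "\<dots> = (\<Sum>i<k. lam i * w i)"
    unfolding w_def by (subst sum.swap) (simp add: sum_distrib_left)
  finally have eq: "(\<Sum>j<p. Re (M $$ (j, j))) = (\<Sum>i<k. lam i * w i)" .
  have norm1: "(\<Sum>j<k. (cmod (u i j))^2) = 1" if "i < k" for i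
  proof -
    have "hpI {..<k} (u i) (u i) = 1" using u that unfolding orthI_def by simp
    then have "of_real (\<Sum>j<k. (cmod (u i j))^2) = (1::complex)" unfolding hpI_self_real .
    then show ?thesis by (simp only: of_real_eq_1_iff)
  qed
  have wb: "0 \<le> w i \<and> w i \<le> 1" if "i < k" for i
  proof
    show "0 \<le> w i" unfolding w_def by (intro sum_nonneg) simp
    have "w i \<le> (\<Sum>j<k. (cmod (u i j))^2)" unfolding w_def using l by (intro sum_mono2) auto
    then show "w i \<le> 1" using norm1[OF that] by simp
  qed
  have col1: "(\<Sum>i<k. (cmod (u i j))^2) = 1" if "j < k" for j
  proof -
    have "(\<Sum>i<k. u i j * cnj (u i j)) = 1" using complete[OF u that that] by simp
    then have "of_real (\<Sum>i<k. (cmod (u i j))^2) = (1::complex)" by (simp only: of_real_sum complex_norm_square)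
    then show ?thesis by (simp only: of_real_eq_1_iff)
  qed
  have ws: "(\<Sum>i<k. w i) = real p"
  proof -
    have "(\<Sum>i<k. w i) = (\<Sum>j<p. \<Sum>i<k. (cmod (u i j))^2)" unfolding w_def by (rule sum.swap)
    also have "\<dots> = (\<Sum>j<p. 1)" using l by (intro sum.cong refl) (simp add: col1)
    finally show ?thesis by simp
  qed
  have "(\<Sum>i<k. lam i * w i) > 0"
  proof (rule list_ineq[OF refl l wb ws])
    show "sum_list (take l (sort (map lam [0..<k]))) > 0" using pos unfolding Ls .
  qed
  then show ?thesis using eq by simp
qed



lemma Ric_entry: "a < k \<Longrightarrow> b < k \<Longrightarrow> Ric_matrix Rc k E $$ (a, b) = (\<Sum>i<k. curv Rc (E a) (E b) (E i) (E i))"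
  unfolding Ric_matrix_def by simp

lemma Ric_herm: assumes K: "kaehler_curvature Rc" shows "herm_mat (Ric_matrix Rc k E) k"
  unfolding herm_mat_def
proof (intro conjI allI impI)
  show "Ric_matrix Rc k E \<in> carrier_mat k k" unfolding Ric_matrix_def by simp
  fix a b assume ab: "a < k" "b < k"
  show "Ric_matrix Rc k E $$ (a, b) = cnj (Ric_matrix Rc k E $$ (b, a))"
    unfolding Ric_entry[OF ab] Ric_entry[OF ab(2,1)] cnj_sum curv_cnj[OF K] ..
qed

lemma frame_exists: assumes "m \<le> n" "n \<le> card (UNIV :: 'n::finite set)" "unitary_frame m (F :: nat \<Rightarrow> 'n \<Rightarrow> complex)"
  shows "\<exists>G. unitary_frame n G \<and> (\<forall>a<m. G a = F a)"
  using ext_full[of "UNIV :: 'n set" n m F] assms unfolding unitary_frame_orthI by auto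

lemma part2: assumes K: "kaehler_curvature Rc" and k: "1 \<le> k" "k \<le> card (UNIV :: 'n::finite set)"
  and lk: "l \<le> k" and R: "Ric_l_positive (Rc :: 'n \<Rightarrow> 'n \<Rightarrow> 'n \<Rightarrow> 'n \<Rightarrow> complex) k l"
  shows "\<forall>p. l \<le> p \<and> p \<le> card (UNIV :: 'n set) \<longrightarrow> BC_positive Rc p"
proof -
  have R': "sum_list (take l (Ric_eigenvalues Rc k F)) > 0" if "unitary_frame k F" for F
    using R that unfolding Ric_l_positive_def by blast
  obtain F0 :: "nat \<Rightarrow> 'n \<Rightarrow> complex" where F0: "unitary_frame k F0"
    using frame_exists[of 0 k "\<lambda>_ _. 0"] k unfolding unitary_frame_def by auto
  have l1: "1 \<le> l"
  proof (rule ccontr)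
    assume "\<not> 1 \<le> l" then have "l = 0" by simp
    then show False using R'[OF F0] by simp
  qed
  have diagpos: "(\<Sum>j<p. Re (Ric_matrix Rc k F $$ (j, j))) > 0" if F: "unitary_frame k F" and p: "l \<le> p" "p \<le> k" for F p
    by (rule KF[OF Ric_herm[OF K] l1 p]) (use R'[OF F] in \<open>simp add: Ric_eigenvalues_def\<close>)
  have Spos: "S_positive Rc k"
    unfolding S_positive_def
  proof (intro allI impI)
    fix F :: "nat \<Rightarrow> 'n \<Rightarrow> complex" assume F: "unitary_frame k F"
    have "S_sum Rc k F = (\<Sum>j<k. Re (Ric_matrix Rc k F $$ (j, j)))"
      unfolding S_sum_def by (intro sum.cong refl) (simp add: Ric_entry Re_sum)
    then show "S_sum Rc k F > 0" using diagpos[OF F lk] by simp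
  qed
  show ?thesis
  proof (intro allI impI)
    fix p assume p: "l \<le> p \<and> p \<le> card (UNIV :: 'n set)"
    show "BC_positive Rc p"
    proof (cases "k \<le> p")
      case True
      then show ?thesis using part1[OF K k(1) Spos] by blast
    next
      case False
      show ?thesis unfolding BC_positive_def
      proof (intro allI impI)
        fix E :: "nat \<Rightarrow> 'n \<Rightarrow> complex" assume E: "unitary_frame p E"
        obtain F where F: "unitary_frame k F" "\<forall>a<p. F a = E a"
          using frame_exists[OF _ k(2) E] False by auto
        have "(\<Sum>j<p. Re (Ric_matrix Rc k F $$ (j, j))) > 0" using diagpos[OF F(1)] p False by simp
        also have "(\<Sum>j<p. Re (Ric_matrix Rc k F $$ (j, j))) = (\<Sum>j<p. \<Sum>i<k. Re (curv Rc (F j) (F j) (F i) (F i)))"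
          using False by (intro sum.cong refl) (simp add: Ric_entry Re_sum)
        also have "\<dots> = (\<Sum>i<k. \<Sum>j<p. Re (curv Rc (F j) (F j) (F i) (F i)))" by (rule sum.swap)
        also have "\<dots> = (\<Sum>i<k. \<Sum>j<p. Re (curv Rc (F i) (F i) (E j) (E j)))"
        proof (intro sum.cong refl)
          fix i j assume "j \<in> {..<p}"
          then have "F j = E j" using F(2) by simp
          then show "Re (curv Rc (F j) (F j) (F i) (F i)) = Re (curv Rc (F i) (F i) (E j) (E j))"
            using curv_pair[OF K, of "F i" "F i" "E j" "E j"] by simp
        qed
        finally obtain i where "(\<Sum>j<p. Re (curv Rc (F i) (F i) (E j) (E j))) > 0"
          using sum_pos_ex by blast
        then show "\<exists>v. (\<Sum>i<p. Re (curv Rc v v (E i) (E i))) > 0" by blast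
      qed
    qed
  qed
qed

theorem proposition4p5:
  fixes Rc :: "'n::finite \<Rightarrow> 'n \<Rightarrow> 'n \<Rightarrow> 'n \<Rightarrow> complex"
    and k l :: nat
  assumes "kaehler_curvature Rc"
    and "1 \<le> k" and "k \<le> card (UNIV :: 'n set)"
  shows "(S_positive Rc k \<longrightarrow> (\<forall>p\<ge>k. BC_positive Rc p)) \<and>
         ((l \<le> k \<and> Ric_l_positive Rc k l) \<longrightarrow> (\<forall>p. l \<le> p \<and> p \<le> card (UNIV :: 'n set) \<longrightarrow> BC_positive Rc p))"
  using part1[OF assms(1,2)] part2[OF assms] by blast


end
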